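(* Let $n\ge4$. The infimum of $\operatorname{Rib}(\mathcal{U}_{w,F})$ over all folded ribbon $n$-stick unknots $\mathcal{U}_{w,F}$ whose diagram $\mathcal{U}$ is a non-degenerate $n$-gon with all fold (interior) angles satisfying $\frac{\pi}{2}\le\alpha_i<\pi$ equals $n\cot(\frac{\pi}{n})$, and it is attained when $\mathcal{U}$ is a regular $n$-gon.
   Context: Non-degenerate $n$-gon: side lengths nonzero, interior angles not equal to $\pi$. For width $w>0$, the folded ribbon $\mathcal{U}_{w,F}$ is a flat strip of width $w$ centred on $\mathcal{U}$ (boundary parallel to and at distance $w/2$ from each edge), folded at each vertex along a fold line through the vertex perpendicular to the bisector of the angle there; it is a piecewise-linear immersion of an annulus or Möbius band into the plane whose only singularities are the pairwise disjoint fold lines, with consistent crossing information; $F$ is the folding information. The folded ribbonlength is $\operatorname{Rib}(\mathcal{U}_{w,F})=\operatorname{Len}(\mathcal{U})/w$. *)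

theory Defs
  imports "HOL-Analysis.Analysis"
begin

text \<open>A closed polygon with n vertices in the plane (identified with the complex plane).
  The vertices are p 0, ..., p (n-1); indices are taken modulo n.\<close>

definition vtx :: "nat \<Rightarrow> (nat \<Rightarrow> complex) \<Rightarrow> nat \<Rightarrow> complex" where
  "vtx n p i = p (i mod n)"

definition prev_vtx :: "nat \<Rightarrow> (nat \<Rightarrow> complex) \<Rightarrow> nat \<Rightarrow> complex" where
  "prev_vtx n p i = p ((i + n - 1) mod n)"

definition next_vtx :: "nat \<Rightarrow> (nat \<Rightarrow> complex) \<Rightarrow> nat \<Rightarrow> complex" where
  "next_vtx n p i = p (Suc i mod n)"

definition edge :: "nat \<Rightarrow> (nat \<Rightarrow> complex) \<Rightarrow> nat \<Rightarrow> complex set" where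
  "edge n p i = closed_segment (vtx n p i) (next_vtx n p i)"

definition simple_polygon :: "nat \<Rightarrow> (nat \<Rightarrow> complex) \<Rightarrow> bool" where
  "simple_polygon n p \<longleftrightarrow> n \<ge> 3 \<and>
     (\<forall>i<n. \<forall>j<n. i \<noteq> j \<longrightarrow>
        (if j = Suc i mod n then edge n p i \<inter> edge n p j = {vtx n p j}
         else if i = Suc j mod n then edge n p i \<inter> edge n p j = {vtx n p i}
         else edge n p i \<inter> edge n p j = {}))"

definition polygon_length :: "nat \<Rightarrow> (nat \<Rightarrow> complex) \<Rightarrow> real" where
  "polygon_length n p = (\<Sum>i<n. cmod (next_vtx n p i - vtx n p i))"

text \<open>Signed area (shoelace formula); its sign is the orientation of the polygon.\<close>
definition signed_area :: "nat \<Rightarrow> (nat \<Rightarrow> complex) \<Rightarrow> real" where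
  "signed_area n p = (\<Sum>i<n. Im (cnj (vtx n p i) * next_vtx n p i)) / 2"

definition turning_angle :: "nat \<Rightarrow> (nat \<Rightarrow> complex) \<Rightarrow> nat \<Rightarrow> real" where
  "turning_angle n p i = Arg ((next_vtx n p i - vtx n p i) / (vtx n p i - prev_vtx n p i))"

text \<open>Interior angle at vertex i of a simple polygon: pi minus the turning angle, measured
  with respect to the positive (counterclockwise) orientation.\<close>
definition interior_angle :: "nat \<Rightarrow> (nat \<Rightarrow> complex) \<Rightarrow> nat \<Rightarrow> real" where
  "interior_angle n p i = pi - sgn (signed_area n p) * turning_angle n p i"

definition nondegenerate :: "nat \<Rightarrow> (nat \<Rightarrow> complex) \<Rightarrow> bool" where
  "nondegenerate n p \<longleftrightarrow>
     (\<forall>i<n. next_vtx n p i \<noteq> vtx n p i) \<and> (\<forall>i<n. interior_angle n p i \<noteq> pi)"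

definition bisector :: "nat \<Rightarrow> (nat \<Rightarrow> complex) \<Rightarrow> nat \<Rightarrow> complex" where
  "bisector n p i = sgn (prev_vtx n p i - vtx n p i) + sgn (next_vtx n p i - vtx n p i)"

definition fold_line :: "nat \<Rightarrow> (nat \<Rightarrow> complex) \<Rightarrow> nat \<Rightarrow> complex set" where
  "fold_line n p i = {x. inner (x - vtx n p i) (bisector n p i) = 0}"

text \<open>The part of the fold line at vertex i lying in the (open) ribbon of width w, i.e. the
  points of the fold line at distance less than w/2 from the line of the edges at vertex i
  (by symmetry of the fold the incoming and the outgoing edge give the same set).\<close>
definition fold_segment :: "nat \<Rightarrow> (nat \<Rightarrow> complex) \<Rightarrow> real \<Rightarrow> nat \<Rightarrow> complex set" where
  "fold_segment n p w i = {x \<in> fold_line n p i.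
       infdist x (affine hull {prev_vtx n p i, vtx n p i}) < w / 2}"

text \<open>Folding (crossing) information can always be chosen consistently
  and does not affect the ribbonlength.\<close>
definition folded_ribbon :: "nat \<Rightarrow> (nat \<Rightarrow> complex) \<Rightarrow> real \<Rightarrow> bool" where
  "folded_ribbon n p w \<longleftrightarrow> w > 0 \<and>
     (\<forall>i<n. \<forall>j<n. i \<noteq> j \<longrightarrow> fold_segment n p w i \<inter> fold_segment n p w j = {})"

definition ribbonlength :: "nat \<Rightarrow> (nat \<Rightarrow> complex) \<Rightarrow> real \<Rightarrow> real" where
  "ribbonlength n p w = polygon_length n p / w"

definition regular_polygon :: "nat \<Rightarrow> (nat \<Rightarrow> complex) \<Rightarrow> bool" where
  "regular_polygon n p \<longleftrightarrow> (\<exists>c r \<theta> s. r > 0 \<and> (s = 1 \<or> s = -1) \<and>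
     (\<forall>i<n. p i = c + complex_of_real r * cis (\<theta> + s * 2 * pi * real i / real n)))"

definition admissible :: "nat \<Rightarrow> (nat \<Rightarrow> complex) \<Rightarrow> bool" where
  "admissible n p \<longleftrightarrow> simple_polygon n p \<and> nondegenerate n p \<and>
     (\<forall>i<n. pi / 2 \<le> interior_angle n p i \<and> interior_angle n p i < pi)"

end

theory Submission
  imports Defs
begin

lemma arg_div:
  assumes "z \<noteq> 0" "w \<noteq> 0" "\<bar>Arg z - Arg w\<bar> < pi"
  shows "Arg (z / w) = Arg z - Arg w"
  using Arg_divide'[OF assms(1,2)] assms(3) by auto

lemma hp_div:
  assumes "Re (z * cnj a) > 0" "Re (w * cnj a) > 0"
  shows "Arg (z / w) = Arg (z * cnj a) - Arg (w * cnj a)"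
proof -
  have a: "a \<noteq> 0" using assms by auto
  have "z / w = (z * cnj a) / (w * cnj a)" using a by (simp add: complex_cnj_zero_iff)
  moreover have "\<bar>Arg (z * cnj a)\<bar> < pi/2" "\<bar>Arg (w * cnj a)\<bar> < pi/2"
    using assms Arg_Re_pos by auto
  moreover have "z * cnj a \<noteq> 0" "w * cnj a \<noteq> 0" using assms by auto
  ultimately show ?thesis using arg_div[of "z * cnj a" "w * cnj a"] by auto
qed

lemma tri_arg:
  assumes "a \<noteq> 0" "c \<noteq> 0" "Arg (c / a) \<noteq> pi"
  shows "Arg (c / a) = Arg ((a + c) / a) + Arg (c / (a + c))"
proof -
  define q where "q = c / a"
  have q0: "q \<noteq> 0" using assms by (simp add: q_def)
  have q1: "1 + q \<noteq> 0"
  proof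
    assume "1 + q = 0" then have "q = -1" by (simp add: add_eq_0_iff)
    moreover have "Arg (-1) = pi" by (simp add: Arg_eq_pi)
    ultimately show False using assms(3) by (simp add: q_def)
  qed
  have e1: "(a + c) / a = 1 + q" using assms by (simp add: q_def field_simps)
  have e2: "c / (a + c) = q / (1 + q)"
    using assms q1 by (simp add: q_def field_simps)
  have "\<bar>Arg q - Arg (1 + q)\<bar> < pi"
  proof (cases "Im q > 0")
    case True
    then show ?thesis using Arg_lt_pi[of q] Arg_lt_pi[of "1+q"] by auto
  next
    case False
    show ?thesis
    proof (cases "Im q < 0")
      case True
      then show ?thesis using Arg_neg_iff[of q] Arg_neg_iff[of "1+q"]
          Arg_bounded[of q] Arg_bounded[of "1+q"] by auto
    next
      case False
      with \<open>\<not> Im q > 0\<close> have im: "Im q = 0" by auto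
      have "\<not> Re q < 0" using assms(3) im Arg_eq_pi[of q] by (auto simp: q_def)
      then have "Re q > 0" using q0 im complex_eq_iff[of q 0] by auto
      then have "Arg q = 0" "Arg (1 + q) = 0" using im
        by (auto simp: Arg_eq_0 complex_is_Real_iff)
      then show ?thesis by simp
    qed
  qed
  then have "Arg (q / (1 + q)) = Arg q - Arg (1 + q)" using arg_div q0 q1 by auto
  then show ?thesis unfolding e1 e2 q_def by simp
qed

lemma inner_cnj: "inner a (z::complex) = Re (z * cnj a)"
  by (simp add: inner_complex_def algebra_simps)

lemma square_arg:
  assumes "closed_segment A B \<inter> closed_segment C D = {}"
  shows "Arg ((D - A) / (C - A)) + Arg ((D - B) / (D - A))
       = Arg ((C - B) / (C - A)) + Arg ((D - B) / (C - B))"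
proof -
  obtain a b where ab: "\<forall>x\<in>closed_segment A B. inner a x < b"
     "\<forall>x\<in>closed_segment C D. inner a x > b"
    using separating_hyperplane_closed_compact[of "closed_segment A B" "closed_segment C D"] assms
    by auto
  have pos: "Re ((y - x) * cnj a) > 0" if "x \<in> {A, B}" "y \<in> {C, D}" for x y
  proof -
    have "inner a x < b" "inner a y > b" using ab that by auto
    then have "inner a y - inner a x > 0" by simp
    then show ?thesis by (simp add: inner_complex_def algebra_simps)
  qed
  have "Arg ((D - A) / (C - A)) = Arg ((D - A) * cnj a) - Arg ((C - A) * cnj a)"
    by (rule hp_div) (use pos in auto)
  moreover have "Arg ((D - B) / (D - A)) = Arg ((D - B) * cnj a) - Arg ((D - A) * cnj a)"
    by (rule hp_div) (use pos in auto)
  moreover have "Arg ((C - B) / (C - A)) = Arg ((C - B) * cnj a) - Arg ((C - A) * cnj a)"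
    by (rule hp_div) (use pos in auto)
  moreover have "Arg ((D - B) / (C - B)) = Arg ((D - B) * cnj a) - Arg ((C - B) * cnj a)"
    by (rule hp_div) (use pos in auto)
  ultimately show ?thesis by simp
qed

lemma tele: "a \<le> b \<Longrightarrow> (\<Sum>j\<in>{a..<b}. (f j - f (Suc j)) :: real) = f a - f b"
  using sum_Suc_diff'[of a b f] by (simp add: sum_negf[symmetric] sum_subtractf)

lemma grid_sum:
  fixes Hh Vv :: "nat \<Rightarrow> nat \<Rightarrow> real" and \<tau> :: "nat \<Rightarrow> real" and n :: nat
  assumes n: "n \<ge> 4"
  and sq: "\<And>i j. i + 2 \<le> j \<Longrightarrow> j \<le> n - 1 \<Longrightarrow> j - i \<le> n - 2 \<Longrightarrow>
              Hh i j + Vv i (Suc j) = Vv i j + Hh (Suc i) j"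
  and tr: "\<And>i. i \<le> n - 2 \<Longrightarrow> Hh i (Suc i) + Vv i (i+2) = \<tau> (Suc i)"
  and tr0: "Hh 1 (n-1) + Vv 0 (n-1) = \<tau> 0"
  shows "(\<Sum>k<n. \<tau> k) = (\<Sum>j\<in>{1..<n-1}. Hh 0 j) + (\<Sum>k\<in>{1..<n-1}. Vv k n) + 2 * \<tau> 0"
proof -
  define r where "r i = (\<Sum>j\<in>{Suc i..<n}. Hh i j)" for i
  have step: "r i = \<tau> (Suc i) + r (Suc i) - Vv i n" if i: "1 \<le> i" "i \<le> n - 2" for i
  proof -
    have "r i = Hh i (Suc i) + (\<Sum>j\<in>{Suc (Suc i)..<n}. Hh i j)"
      unfolding r_def using i n by (subst sum.atLeast_Suc_lessThan) auto
    also have "(\<Sum>j\<in>{Suc (Suc i)..<n}. Hh i j)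
        = (\<Sum>j\<in>{Suc (Suc i)..<n}. (Vv i j - Vv i (Suc j)) + Hh (Suc i) j)"
    proof (rule sum.cong)
      fix j assume j: "j \<in> {Suc (Suc i)..<n}"
      have "j - i \<le> n - 2" "j \<le> n - 1" "i + 2 \<le> j" using j i by auto
      then show "Hh i j = (Vv i j - Vv i (Suc j)) + Hh (Suc i) j"
        using sq[of i j] by auto
    qed simp
    also have "\<dots> = (Vv i (Suc (Suc i)) - Vv i n) + r (Suc i)"
      unfolding sum.distrib r_def using i n by (subst tele) auto
    finally show ?thesis using tr[of i] i by (simp add: numeral_2_eq_2)
  qed
  have rows: "r (n - 1 - d) = (\<Sum>k\<in>{n - d..<n}. \<tau> k) - (\<Sum>k\<in>{n - 1 - d..<n-1}. Vv k n)"
    if "d \<le> n - 2" for d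
    using that
  proof (induction d)
    case 0
    then show ?case using n by (simp add: r_def)
  next
    case (Suc d)
    have "r (n - 1 - Suc d) = \<tau> (n - 1 - d) + r (n - 1 - d) - Vv (n - 1 - Suc d) n"
      using step[of "n - 1 - Suc d"] Suc.prems n
      by (simp add: Suc_diff_Suc)
    also have "\<dots> = \<tau> (n - 1 - d) + ((\<Sum>k\<in>{n - d..<n}. \<tau> k) - (\<Sum>k\<in>{n - 1 - d..<n-1}. Vv k n))
                   - Vv (n - 1 - Suc d) n"
      using Suc by simp
    also have "\<dots> = (\<Sum>k\<in>{n - Suc d..<n}. \<tau> k) - (\<Sum>k\<in>{n - 1 - Suc d..<n-1}. Vv k n)"
    proof -
      have a: "(\<Sum>k\<in>{n - Suc d..<n}. \<tau> k) = \<tau> (n - 1 - d) + (\<Sum>k\<in>{n - d..<n}. \<tau> k)"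
      proof -
        have "n - Suc d = n - 1 - d" "Suc (n - 1 - d) = n - d" using Suc.prems n by auto
        moreover have "n - 1 - d < n" using n by auto
        ultimately show ?thesis by (simp add: sum.atLeast_Suc_lessThan)
      qed
      have b: "(\<Sum>k\<in>{n - 1 - Suc d..<n-1}. Vv k n) = Vv (n - 1 - Suc d) n + (\<Sum>k\<in>{n - 1 - d..<n-1}. Vv k n)"
        using Suc.prems n by (subst sum.atLeast_Suc_lessThan) (auto simp: Suc_diff_Suc)
      show ?thesis using a b by simp
    qed
    finally show ?case .
  qed
  have r1: "r 1 = (\<Sum>k\<in>{2..<n}. \<tau> k) - (\<Sum>k\<in>{1..<n-1}. Vv k n)"
    using rows[of "n - 2"] n by (simp add: numeral_2_eq_2 Suc_diff_Suc)
  have r0: "(\<Sum>j\<in>{1..<n-1}. Hh 0 j) = \<tau> 1 + r 1 - \<tau> 0"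
  proof -
    have "(\<Sum>j\<in>{1..<n-1}. Hh 0 j) = Hh 0 1 + (\<Sum>j\<in>{2..<n-1}. Hh 0 j)"
      using n by (subst sum.atLeast_Suc_lessThan) (auto simp: numeral_2_eq_2)
    also have "(\<Sum>j\<in>{2..<n-1}. Hh 0 j) = (\<Sum>j\<in>{2..<n-1}. (Vv 0 j - Vv 0 (Suc j)) + Hh 1 j)"
    proof (rule sum.cong)
      fix j assume j: "j \<in> {2..<n-1}"
      then have "j \<le> n - 2" by auto
      then show "Hh 0 j = (Vv 0 j - Vv 0 (Suc j)) + Hh 1 j"
        using sq[of 0 j] j by auto
    qed simp
    also have "\<dots> = (Vv 0 2 - Vv 0 (n-1)) + (\<Sum>j\<in>{2..<n-1}. Hh 1 j)"
      unfolding sum.distrib using n by (subst tele) auto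
    also have "(\<Sum>j\<in>{2..<n-1}. Hh 1 j) = r 1 - Hh 1 (n-1)"
    proof -
      have "{2..<n} = insert (n-1) {2..<n-1}" using n by auto
      then show ?thesis unfolding r_def by (simp add: numeral_2_eq_2)
    qed
    finally show ?thesis using tr[of 0] tr0 by (simp add: numeral_2_eq_2)
  qed
  have "(\<Sum>k<n. \<tau> k) = \<tau> 0 + \<tau> 1 + (\<Sum>k\<in>{2..<n}. \<tau> k)"
  proof -
    have "{..<n} = insert 0 (insert 1 {2..<n})" using n by auto
    then show ?thesis by simp
  qed
  then show ?thesis using r0 r1 by simp
qed

lemma sgn_div_c: "z \<noteq> 0 \<Longrightarrow> w \<noteq> 0 \<Longrightarrow> sgn ((z::complex) / w) = sgn z / sgn w"
  by (simp add: sgn_div_norm norm_divide field_simps)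

lemma turning_sum_W:
  fixes W :: "nat \<Rightarrow> complex" and n :: nat and s :: real
  assumes n: "n \<ge> 4"
  and per: "\<And>k. W (k + n) = W k"
  and disj: "\<And>i j. j < n \<Longrightarrow> i + 2 \<le> j \<Longrightarrow> j - i \<le> n - 2 \<Longrightarrow>
              closed_segment (W i) (W (Suc i)) \<inter> closed_segment (W j) (W (Suc j)) = {}"
  and enz: "\<And>k. W (Suc k) \<noteq> W k"
  and ext: "\<And>j. 1 \<le> j \<Longrightarrow> j \<le> n - 1 \<Longrightarrow> W j \<noteq> W 0 \<and> 0 \<le> Arg (W j - W 0) \<and> Arg (W j - W 0) < pi"
  and s: "s = 1 \<or> s = -1"
  and turn: "\<And>k. 0 < s * Arg ((W (Suc k) - W k) / (W k - W (k + n - 1)))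
                \<and> s * Arg ((W (Suc k) - W k) / (W k - W (k + n - 1))) \<le> pi / 2"
  shows "s * (\<Sum>k<n. Arg ((W (Suc k) - W k) / (W k - W (k + n - 1)))) = 2 * pi"
proof -
  define \<tau> where "\<tau> k = Arg ((W (Suc k) - W k) / (W k - W (k + n - 1)))" for k
  define Hh where "Hh i j = Arg ((W (Suc j) - W i) / (W j - W i))" for i j
  define Vv where "Vv i j = Arg ((W j - W (Suc i)) / (W j - W i))" for i j
  have tb: "\<bar>\<tau> k\<bar> \<le> pi / 2" for k
    using turn[of k] s unfolding \<tau>_def by auto
  have Wn: "W n = W 0" using per[of 0] by simp
  have prevW: "W (Suc k + n - 1) = W k" for k using per[of k] by simp
  have sq: "Hh i j + Vv i (Suc j) = Vv i j + Hh (Suc i) j"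
    if "i + 2 \<le> j" "j \<le> n - 1" "j - i \<le> n - 2" for i j
  proof -
    have "j < n" using that n by auto
    then show ?thesis
      using square_arg[OF disj[of j i]] that unfolding Hh_def Vv_def by auto
  qed
  have tr: "Hh i (Suc i) + Vv i (i+2) = \<tau> (Suc i)" for i
  proof -
    have "\<bar>\<tau> (Suc i)\<bar> \<le> pi/2" by (rule tb)
    then have np: "Arg ((W (Suc (Suc i)) - W (Suc i)) / (W (Suc i) - W i)) \<noteq> pi"
      unfolding \<tau>_def prevW by auto
    have "Arg ((W (Suc (Suc i)) - W (Suc i)) / (W (Suc i) - W i))
        = Arg (((W (Suc i) - W i) + (W (Suc (Suc i)) - W (Suc i))) / (W (Suc i) - W i))
          + Arg ((W (Suc (Suc i)) - W (Suc i)) / ((W (Suc i) - W i) + (W (Suc (Suc i)) - W (Suc i))))"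
      by (rule tri_arg) (use enz np in auto)
    then show ?thesis unfolding Hh_def Vv_def \<tau>_def prevW by (simp add: numeral_2_eq_2)
  qed
  have tr0: "Hh 1 (n-1) + Vv 0 (n-1) = \<tau> 0"
  proof -
    have e0: "W (0 + n - 1) = W (n - 1)" by simp
    have en: "W (Suc (n - 1)) = W 0" using n Wn by simp
    have "W 0 \<noteq> W (n - 1)" using enz[of "n-1"] en by auto
    have "\<bar>\<tau> 0\<bar> \<le> pi/2" by (rule tb)
    then have np: "Arg ((W 1 - W 0) / (W 0 - W (n - 1))) \<noteq> pi"
      unfolding \<tau>_def by auto
    have "Arg ((W 1 - W 0) / (W 0 - W (n - 1)))
        = Arg (((W 0 - W (n - 1)) + (W 1 - W 0)) / (W 0 - W (n - 1)))
          + Arg ((W 1 - W 0) / ((W 0 - W (n - 1)) + (W 1 - W 0)))"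
      by (rule tri_arg) (use enz[of 0] \<open>W 0 \<noteq> W (n - 1)\<close> np in auto)
    moreover have "((W 0 - W (n - 1)) + (W 1 - W 0)) / (W 0 - W (n - 1))
        = (W (n - 1) - W 1) / (W (n - 1) - W 0)"
    proof -
      have "(W 0 - W (n-1)) + (W 1 - W 0) = - (W (n-1) - W 1)" by simp
      moreover have "W 0 - W (n-1) = - (W (n-1) - W 0)" by simp
      ultimately show ?thesis by (simp only: minus_divide_divide)
    qed
    moreover have "(W 1 - W 0) / ((W 0 - W (n - 1)) + (W 1 - W 0))
        = (W n - W 1) / (W (n - 1) - W 1)"
    proof -
      have "(W 0 - W (n-1)) + (W 1 - W 0) = - (W (n-1) - W 1)" by simp
      moreover have "W 1 - W 0 = - (W n - W 1)" unfolding Wn by simp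
      ultimately show ?thesis by (simp only: minus_divide_divide)
    qed
    ultimately show ?thesis unfolding Hh_def Vv_def \<tau>_def using n en
      by (simp add: Suc_diff_Suc)
  qed
  have gs: "(\<Sum>k<n. \<tau> k) = (\<Sum>j\<in>{1..<n-1}. Hh 0 j) + (\<Sum>k\<in>{1..<n-1}. Vv k n) + 2 * \<tau> 0"
    by (rule grid_sum[OF n]) (use sq tr tr0 in auto)
  define g where "g j = Arg (W j - W 0)" for j
  have hh: "Hh 0 j = g (Suc j) - g j" if "j \<in> {1..<n-1}" for j
  proof -
    have a: "W (Suc j) \<noteq> W 0 \<and> 0 \<le> g (Suc j) \<and> g (Suc j) < pi"
      using ext[of "Suc j"] that unfolding g_def by auto
    have b: "W j \<noteq> W 0 \<and> 0 \<le> g j \<and> g j < pi"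
      using ext[of j] that unfolding g_def by auto
    show ?thesis unfolding Hh_def g_def
      by (rule arg_div) (use a b in \<open>auto simp: g_def\<close>)
  qed
  have vv: "Vv k n = Hh 0 k" for k
  proof -
    have "(W n - W (Suc k)) / (W n - W k) = (W (Suc k) - W 0) / (W k - W 0)"
    proof -
      have "W n - W (Suc k) = - (W (Suc k) - W 0)" "W n - W k = - (W k - W 0)" unfolding Wn by simp_all
      then show ?thesis by (simp only: minus_divide_divide)
    qed
    then show ?thesis unfolding Vv_def Hh_def by simp
  qed
  define \<gamma> where "\<gamma> = g (n - 1) - g 1"
  have sumH: "(\<Sum>j\<in>{1..<n-1}. Hh 0 j) = \<gamma>"
  proof -
    have "(\<Sum>j\<in>{1..<n-1}. Hh 0 j) = (\<Sum>j\<in>{1..<n-1}. g (Suc j) - g j)"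
      using hh by (rule sum.cong[OF refl])
    also have "\<dots> = \<gamma>" unfolding \<gamma>_def using n by (subst sum_Suc_diff') auto
    finally show ?thesis .
  qed
  have tot: "(\<Sum>k<n. \<tau> k) = 2 * (\<gamma> + \<tau> 0)"
    using gs sumH vv by simp
  have W1: "W 1 \<noteq> W 0" "W (n-1) \<noteq> W 0" using ext[of 1] ext[of "n-1"] n by auto
  have W0n: "W 0 - W (n - 1) \<noteq> 0" using W1 by auto
  have "cis (\<gamma> + \<tau> 0) = cis (g (n-1)) / cis (g 1) * cis (\<tau> 0)"
    unfolding \<gamma>_def by (simp add: cis_mult cis_divide)
  also have "\<dots> = sgn (W (n-1) - W 0) / sgn (W 1 - W 0) * sgn ((W 1 - W 0) / (W 0 - W (n - 1)))"
    unfolding g_def \<tau>_def using W1 W0n by (simp add: cis_Arg)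
  also have "\<dots> = -1"
  proof -
    have "sgn (W 0 - W (n - 1)) = - sgn (W (n-1) - W 0)"
      by (metis minus_diff_eq sgn_minus)
    moreover have "sgn (W (n-1) - W 0) \<noteq> 0" "sgn (W 1 - W 0) \<noteq> 0" using W1 by (simp_all add: sgn_zero_iff)
    ultimately show ?thesis using W1 W0n by (simp add: sgn_div_c field_simps)
  qed
  finally have "cis (\<gamma> + \<tau> 0) = -1" .
  then have "Re (cis (\<gamma> + \<tau> 0)) = -1" by simp
  then have "cos (\<gamma> + \<tau> 0) = -1" by simp
  then obtain k :: int where k: "\<gamma> + \<tau> 0 = (2 * real_of_int k + 1) * pi"
    using cos_eq_minus1 by blast
  have gb: "0 \<le> g (n-1)" "g (n-1) < pi" "0 \<le> g 1" "g 1 < pi"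
    using ext[of 1] ext[of "n-1"] n unfolding g_def by auto
  have "\<bar>\<gamma> + \<tau> 0\<bar> < 3 * pi / 2" using gb tb[of 0] unfolding \<gamma>_def by (simp add: abs_if split: if_splits) linarith?
  then have "\<bar>2 * real_of_int k + 1\<bar> < 3/2" using k pi_gt_zero
    by (simp add: abs_mult)
  then have "k = 0 \<or> k = -1" by linarith
  then have pm: "\<gamma> + \<tau> 0 = pi \<or> \<gamma> + \<tau> 0 = - pi" using k by auto
  have pos: "0 < s * (\<Sum>k<n. \<tau> k)"
  proof -
    have "s * (\<Sum>k<n. \<tau> k) = (\<Sum>k<n. s * \<tau> k)" by (simp add: sum_distrib_left)
    moreover have "0 < (\<Sum>k<n. s * \<tau> k)"
    proof (rule sum_pos)
      have "0 \<in> {..<n}" using n by simp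
      then show "{..<n} \<noteq> {}" by blast
    qed (use turn in \<open>auto simp: \<tau>_def\<close>)
    ultimately show ?thesis by simp
  qed
  have pp: "0 < pi" by simp
  have "s * (\<Sum>k<n. \<tau> k) = 2 * pi"
  proof -
    have "(\<Sum>k<n. \<tau> k) = 2*pi \<or> (\<Sum>k<n. \<tau> k) = -2*pi" using pm tot by auto
    then show ?thesis using s pos pp by (auto simp: mult_less_0_iff)
  qed
  then show ?thesis unfolding \<tau>_def .
qed

lemma mod_add_cancel_nat:
  fixes a b m n :: nat
  assumes "(a + m) mod n = (b + m) mod n" shows "a mod n = b mod n"
proof -
  have h: "(int a + int m) mod int n = (int b + int m) mod int n"
    using assms by (metis of_nat_add of_nat_mod)
  have "int a mod int n = (((int a + int m) mod int n) - int m) mod int n"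
    by (simp add: mod_diff_left_eq)
  also have "\<dots> = (((int b + int m) mod int n) - int m) mod int n" using h by simp
  also have "\<dots> = int b mod int n" by (simp add: mod_diff_left_eq)
  finally show ?thesis by (metis of_nat_eq_iff of_nat_mod)
qed

lemma sum_rotate:
  fixes n m :: nat and f :: "nat \<Rightarrow> real"
  assumes "n > 0"
  shows "(\<Sum>k<n. f ((k + m) mod n)) = (\<Sum>i<n. (f i :: real))"
proof -
  define g where "g k = (k + m) mod n" for k
  have inj: "inj_on g {..<n}"
  proof (rule inj_onI)
    fix x y assume "x \<in> {..<n}" "y \<in> {..<n}" "g x = g y"
    then show "x = y" using mod_add_cancel_nat[of x m n y] unfolding g_def by auto
  qed
  have sub: "g ` {..<n} \<subseteq> {..<n}" using assms unfolding g_def by auto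
  have im: "g ` {..<n} = {..<n}" by (rule endo_inj_surj[OF _ sub inj]) simp
  have "(\<Sum>i<n. f i) = sum f (g ` {..<n})" using im by simp
  also have "\<dots> = (\<Sum>k<n. f (g k))" using sum.reindex[OF inj] by simp
  finally show ?thesis unfolding g_def by simp
qed

lemma prev_vtx_eq: "prev_vtx n p i = vtx n p (i + n - 1)"
  and next_vtx_eq: "next_vtx n p i = vtx n p (Suc i)"
  by (simp_all add: prev_vtx_def next_vtx_def vtx_def)

lemma vtx_mod: "vtx n p (i mod n) = vtx n p i"
  by (simp add: vtx_def)

lemma turning_vtx: "turning_angle n p i =
   Arg ((vtx n p (Suc i) - vtx n p i) / (vtx n p i - vtx n p (i + n - 1)))"
  by (simp add: turning_angle_def prev_vtx_eq next_vtx_eq)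

lemma simple_disj:
  assumes "simple_polygon n p" "I < n" "J < n" "I \<noteq> J" "J \<noteq> Suc I mod n" "I \<noteq> Suc J mod n"
  shows "edge n p I \<inter> edge n p J = {}"
  using assms unfolding simple_polygon_def by metis

lemma vtx_distinct:
  assumes sp: "simple_polygon n p" and nd: "nondegenerate n p"
    and I: "I < n" and J: "J < n" and ne: "I \<noteq> J"
  shows "vtx n p I \<noteq> vtx n p J"
proof (cases "J = Suc I mod n")
  case True
  have "next_vtx n p I \<noteq> vtx n p I" using nd I unfolding nondegenerate_def by auto
  moreover have "next_vtx n p I = vtx n p J" using True J by (simp add: next_vtx_def vtx_def)
  ultimately show ?thesis by simp
next
  case F1: False
  show ?thesis
  proof (cases "I = Suc J mod n")
    case True
    have "next_vtx n p J \<noteq> vtx n p J" using nd J unfolding nondegenerate_def by auto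
    moreover have "next_vtx n p J = vtx n p I" using True I by (simp add: next_vtx_def vtx_def)
    ultimately show ?thesis by simp
  next
    case False
    have d: "edge n p I \<inter> edge n p J = {}" by (rule simple_disj) (use assms F1 False in auto)
    have "vtx n p I \<in> edge n p I" "vtx n p J \<in> edge n p J" by (simp_all add: edge_def)
    then show ?thesis using d by auto
  qed
qed

lemma turning_total:
  assumes n: "n \<ge> 4" and sp: "simple_polygon n p" and nd: "nondegenerate n p"
    and s: "s = 1 \<or> s = -1"
    and turn: "\<And>i. i < n \<Longrightarrow> 0 < s * turning_angle n p i \<and> s * turning_angle n p i \<le> pi / 2"
  shows "s * (\<Sum>i<n. turning_angle n p i) = 2 * pi"
proof -
  define y0 where "y0 = Min ((\<lambda>k. Im (p k)) ` {..<n})"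
  have n0: "0 \<in> {..<n}" using n by simp
  have "y0 \<in> (\<lambda>k. Im (p k)) ` {..<n}" unfolding y0_def using n0 by (intro Min_in) auto
  then obtain k0 where k0: "k0 < n" "Im (p k0) = y0" by auto
  define B where "B = {k. k < n \<and> Im (p k) = y0}"
  have Bne: "B \<noteq> {}" "finite B" using k0 unfolding B_def by auto
  define x0 where "x0 = Min ((\<lambda>k. Re (p k)) ` B)"
  have "x0 \<in> (\<lambda>k. Re (p k)) ` B" unfolding x0_def using Bne by (intro Min_in) auto
  then obtain m where m: "m \<in> B" "Re (p m) = x0" by auto
  have mn: "m < n" using m unfolding B_def by auto
  have ymin: "Im (p m) \<le> Im (p k)" if "k < n" for k
    using m that unfolding B_def y0_def by auto
  have xmin: "Re (p m) \<le> Re (p k)" if "k < n" "Im (p k) = Im (p m)" for k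
  proof -
    have "k \<in> B" using that m unfolding B_def by auto
    then show ?thesis using m Bne unfolding x0_def by auto
  qed
  define W where "W k = vtx n p (k + m)" for k
  have Wp: "W k = p ((k + m) mod n)" for k by (simp add: W_def vtx_def)
  have key: "Arg ((W (Suc k) - W k) / (W k - W (k + n - 1))) = turning_angle n p ((k + m) mod n)" for k
  proof -
    have a: "W (Suc k) = vtx n p (Suc ((k + m) mod n))"
      by (simp add: W_def vtx_def mod_Suc_eq)
    have b: "W k = vtx n p ((k + m) mod n)" by (simp add: W_def vtx_mod)
    have c: "W (k + n - 1) = vtx n p ((k + m) mod n + n - 1)"
    proof -
      have "k + n - 1 + m = (k + m) + (n - 1)" "(k + m) mod n + n - 1 = (k + m) mod n + (n - 1)"
        using n by auto
      have e1: "W (k + n - 1) = p ((k + m + (n - 1)) mod n)"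
        unfolding Wp using n by (simp add: add_ac)
      have e2: "vtx n p ((k + m) mod n + n - 1) = p ((k + m + (n - 1)) mod n)"
      proof -
        have "(k + m) mod n + n - 1 = (k + m) mod n + (n - 1)" using n by simp
        then show ?thesis unfolding vtx_def by (simp only: mod_add_left_eq)
      qed
      show ?thesis using e1 e2 by simp
    qed
    show ?thesis unfolding turning_vtx a b c ..
  qed
  have main: "s * (\<Sum>k<n. Arg ((W (Suc k) - W k) / (W k - W (k + n - 1)))) = 2 * pi"
  proof (rule turning_sum_W[OF n _ _ _ _ s])
    show "W (k + n) = W k" for k
    proof -
      have e: "k + n + m = (k + m) + n" by simp
      show ?thesis unfolding Wp e mod_add_self2 ..
    qed
  next
    fix i j assume ij: "j < n" "i + 2 \<le> j" "j - i \<le> n - 2"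
    define I where "I = (i + m) mod n"
    define J where "J = (j + m) mod n"
    have eI: "closed_segment (W i) (W (Suc i)) = edge n p I"
      by (simp add: edge_def Wp I_def vtx_def next_vtx_def mod_Suc_eq)
    have eJ: "closed_segment (W j) (W (Suc j)) = edge n p J"
      by (simp add: edge_def Wp J_def vtx_def next_vtx_def mod_Suc_eq)
    have In: "I < n" "J < n" using n by (simp_all add: I_def J_def)
    have "I \<noteq> J"
    proof
      assume "I = J" then have "i mod n = j mod n" using mod_add_cancel_nat unfolding I_def J_def by blast
      then show False using ij by auto
    qed
    moreover have "J \<noteq> Suc I mod n"
    proof
      assume "J = Suc I mod n"
      then have "(j + m) mod n = (Suc i + m) mod n" unfolding I_def J_def by (simp add: mod_Suc_eq)
      then have "j mod n = Suc i mod n" using mod_add_cancel_nat by blast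
      then show False using ij by auto
    qed
    moreover have "I \<noteq> Suc J mod n"
    proof
      assume "I = Suc J mod n"
      then have "(i + m) mod n = (Suc j + m) mod n" unfolding I_def J_def by (simp add: mod_Suc_eq)
      then have h: "i mod n = Suc j mod n" using mod_add_cancel_nat by blast
      show False
      proof (cases "Suc j < n")
        case True then show False using h ij by auto
      next
        case False then have "Suc j = n" using ij by auto
        then show False using h ij n by auto
      qed
    qed
    ultimately have "edge n p I \<inter> edge n p J = {}" using simple_disj[OF sp In] by blast
    then show "closed_segment (W i) (W (Suc i)) \<inter> closed_segment (W j) (W (Suc j)) = {}"
      using eI eJ by simp
  next
    fix k
    define I where "I = (k + m) mod n"
    have "I < n" using n by (simp add: I_def)
    then have "next_vtx n p I \<noteq> vtx n p I" using nd unfolding nondegenerate_def by auto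
    moreover have "next_vtx n p I = W (Suc k)" "vtx n p I = W k"
      by (simp_all add: Wp I_def vtx_def next_vtx_def mod_Suc_eq)
    ultimately show "W (Suc k) \<noteq> W k" by simp
  next
    fix j assume j: "1 \<le> j" "j \<le> n - 1"
    define J where "J = (j + m) mod n"
    have Jn: "J < n" using n by (simp add: J_def)
    have "J \<noteq> m"
    proof
      assume "J = m"
      then have "(j + m) mod n = (0 + m) mod n" using mn unfolding J_def by simp
      then have "j mod n = 0 mod n" using mod_add_cancel_nat by blast
      then show False using j by auto
    qed
    then have ne: "p J \<noteq> p m" using vtx_distinct[OF sp nd Jn mn] Jn mn by (simp add: vtx_def)
    have W0: "W 0 = p m" using mn by (simp add: Wp)
    have Wj: "W j = p J" by (simp add: Wp J_def)
    have im: "0 \<le> Im (p J - p m)" using ymin[OF Jn] by simp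
    have re: "Im (p J - p m) = 0 \<Longrightarrow> 0 < Re (p J - p m)"
    proof -
      assume h: "Im (p J - p m) = 0"
      then have "Re (p m) \<le> Re (p J)" using xmin[OF Jn] by simp
      moreover have "Re (p J - p m) \<noteq> 0" using h ne complex_eq_iff[of "p J" "p m"] by auto
      ultimately show ?thesis by simp
    qed
    have a1: "0 \<le> Arg (p J - p m)" using im Arg_less_0 by blast
    have a2: "Arg (p J - p m) \<noteq> pi" using re Arg_eq_pi by force
    have a3: "Arg (p J - p m) \<le> pi" by (rule Arg_le_pi)
    show "W j \<noteq> W 0 \<and> 0 \<le> Arg (W j - W 0) \<and> Arg (W j - W 0) < pi"
      unfolding W0 Wj using ne a1 a2 a3 by auto
  next
    fix k
    have "(k + m) mod n < n" using n by simp
    then show "0 < s * Arg ((W (Suc k) - W k) / (W k - W (k + n - 1))) \<and>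
          s * Arg ((W (Suc k) - W k) / (W k - W (k + n - 1))) \<le> pi / 2"
      unfolding key using turn by blast
  qed
  have "(\<Sum>k<n. Arg ((W (Suc k) - W k) / (W k - W (k + n - 1))))
      = (\<Sum>k<n. turning_angle n p ((k + m) mod n))" unfolding key ..
  also have "\<dots> = (\<Sum>i<n. turning_angle n p i)" using n by (intro sum_rotate) auto
  finally show ?thesis using main by simp
qed

lemma s_cos: "s = 1 \<or> s = -1 \<Longrightarrow> cos (s * x) = cos x"
  by auto
lemma s_sin: "s = 1 \<or> s = -1 \<Longrightarrow> sin (s * x) = s * sin x"
  by auto
lemma s_sq: "s = 1 \<or> s = -1 \<Longrightarrow> s * s = (1::real)"
  by auto

lemma cot_id1: "sin (c::real) \<noteq> 0 \<Longrightarrow> cot c * (1 - cos (2 * c)) = sin (2 * c)"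
proof -
  assume h: "sin c \<noteq> 0"
  have a: "sin (2*c) = 2 * sin c * cos c" by (rule sin_double)
  have b: "cos (2*c) = 1 - 2 * (sin c)^2" by (rule cos_double_sin)
  show ?thesis unfolding a b cot_def using h by (simp add: field_simps power2_eq_square)
qed
lemma cot_id2: "sin (c::real) \<noteq> 0 \<Longrightarrow> cot c * sin (2 * c) = 1 + cos (2 * c)"
proof -
  assume h: "sin c \<noteq> 0"
  have a: "sin (2*c) = 2 * sin c * cos c" by (rule sin_double)
  have b: "cos (2*c) = 2 * (cos c)^2 - 1" by (rule cos_double_cos)
  show ?thesis unfolding a b cot_def using h by (simp add: field_simps power2_eq_square)
qed

lemma unit_re: "cmod u = 1 \<Longrightarrow> Re (u * A * cnj (u * B)) = Re (A * cnj B)"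
proof -
  assume "cmod u = 1"
  then have "u * cnj u = 1" using complex_norm_square[of u] by simp
  moreover have "u * A * cnj (u * B) = (u * cnj u) * (A * cnj B)" by (simp add: ac_simps)
  ultimately have e: "u * A * cnj (u * B) = A * cnj B" by simp
  show ?thesis by (subst e) (rule refl)
qed

lemma unit_norm: "cmod u = 1 \<Longrightarrow> cmod (u * A) = cmod A"
  by (simp add: norm_mult)

lemma sgn_turn: "z \<noteq> 0 \<Longrightarrow> w \<noteq> 0 \<Longrightarrow> sgn z = sgn w * cis (Arg (z / w))"
  by (simp add: cis_Arg sgn_div_c sgn_zero_iff)

lemma cmod_Complex_sq: "cmod (Complex a b) = sqrt (a^2 + b^2)"
  by (simp add: cmod_def)

lemma sgn_decomp: "(z::complex) = of_real (cmod z) * sgn z"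
  by (cases "z = 0") (simp_all add: sgn_div_norm scaleR_conv_of_real field_simps)

lemma fold_bound:
  assumes n: "n \<ge> 3" and fr: "folded_ribbon n p w" and nd: "nondegenerate n p"
    and s: "s = 1 \<or> s = -1" and i: "i < n"
    and t1: "0 < s * turning_angle n p i" "s * turning_angle n p i \<le> pi/2"
    and t2: "0 < s * turning_angle n p (Suc i mod n)" "s * turning_angle n p (Suc i mod n) \<le> pi/2"
  shows "w / 2 * (cot (s * turning_angle n p i / 2) + cot (s * turning_angle n p (Suc i mod n) / 2))
          \<le> cmod (next_vtx n p i - vtx n p i)"
proof (rule ccontr)
  define i' where "i' = Suc i mod n"
  define v0 where "v0 = vtx n p i"
  define v1 where "v1 = vtx n p (Suc i)"
  define vp where "vp = vtx n p (i + n - 1)"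
  define v2 where "v2 = vtx n p (Suc (Suc i))"
  define t where "t = turning_angle n p i"
  define t' where "t' = turning_angle n p i'"
  define c where "c = s * t / 2"
  define c' where "c' = s * t' / 2"
  define K where "K = cot c"
  define K' where "K' = cot c'"
  define L where "L = cmod (v1 - v0)"
  have i'n: "i' < n" using n by (simp add: i'_def)
  have ss: "s * s = 1" using s by auto
  have vi': "vtx n p i' = v1" by (simp add: i'_def v1_def vtx_mod)
  have pi': "prev_vtx n p i' = v0"
  proof -
    have "(Suc i mod n + n - 1) mod n = (Suc i mod n + (n - 1)) mod n" using n by simp
    also have "\<dots> = (Suc i + (n - 1)) mod n" by (simp add: mod_add_left_eq)
    also have "Suc i + (n - 1) = i + n" using n by simp
    finally have "(Suc i mod n + n - 1) mod n = i mod n" by simp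
    then show ?thesis by (simp add: prev_vtx_def i'_def v0_def vtx_def)
  qed
  have ni': "next_vtx n p i' = v2" by (simp add: next_vtx_def i'_def v2_def vtx_def mod_Suc_eq)
  have pv: "prev_vtx n p i = vp" by (simp add: prev_vtx_eq vp_def)
  have nv: "next_vtx n p i = v1" by (simp add: next_vtx_eq v1_def)
  have tt: "t = Arg ((v1 - v0) / (v0 - vp))" by (simp add: t_def turning_vtx v0_def v1_def vp_def)
  have tt': "t' = Arg ((v2 - v1) / (v1 - v0))"
    unfolding t'_def turning_angle_def vi' pi' ni' ..
  have d10: "v1 \<noteq> v0" using nd i unfolding nondegenerate_def nv[symmetric] v0_def by auto
  have d21: "v2 \<noteq> v1" using nd i'n unfolding nondegenerate_def ni'[symmetric] vi'[symmetric] by auto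
  have d0p: "v0 \<noteq> vp"
  proof -
    define j where "j = (i + n - 1) mod n"
    have jn: "j < n" using n by (simp add: j_def)
    have "next_vtx n p j = v0"
    proof -
      have "Suc j mod n = Suc (i + n - 1) mod n" by (simp add: j_def mod_Suc_eq)
      also have "Suc (i + n - 1) = i + n" using n by simp
      finally show ?thesis by (simp add: next_vtx_def v0_def vtx_def)
    qed
    moreover have "vtx n p j = vp" by (simp add: j_def vp_def vtx_mod)
    ultimately show ?thesis using nd jn unfolding nondegenerate_def by auto
  qed
  have cb: "0 < c" "c \<le> pi / 4" using t1 unfolding c_def t_def by auto
  have cb': "0 < c'" "c' \<le> pi / 4" using t2 unfolding c'_def t'_def i'_def by auto
  have sc: "sin c > 0" using cb by (intro sin_gt_zero) auto
  have sc': "sin c' > 0" using cb' by (intro sin_gt_zero) auto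
  have cc: "cos c > 0" using cb by (intro cos_gt_zero_pi) auto
  have cc': "cos c' > 0" using cb' by (intro cos_gt_zero_pi) auto
  have Kp: "K > 0" using sc cc by (simp add: K_def cot_def)
  have Kp': "K' > 0" using sc' cc' by (simp add: K'_def cot_def)
  have t2c: "t = s * (2 * c)" unfolding c_def using ss by (simp add: algebra_simps)
  have t2c': "t' = s * (2 * c')" unfolding c'_def using ss by (simp add: algebra_simps)
  have cost: "cos t = cos (2 * c)" "sin t = s * sin (2 * c)"
    unfolding t2c using s_cos[OF s] s_sin[OF s] by auto
  have cost': "cos t' = cos (2 * c')" "sin t' = s * sin (2 * c')"
    unfolding t2c' using s_cos[OF s] s_sin[OF s] by auto
  have id1: "K * (1 - cos (2 * c)) = sin (2 * c)" "K * sin (2 * c) = 1 + cos (2 * c)"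
    using cot_id1 cot_id2 sc unfolding K_def by auto
  have id1': "K' * (1 - cos (2 * c')) = sin (2 * c')"
    using cot_id1 sc' unfolding K'_def by auto
  assume "\<not> ?thesis"
  then have Lw: "L < w / 2 * (K + K')"
    unfolding L_def K_def K'_def c_def c'_def t_def t'_def i'_def nv v0_def by simp
  have Lp: "L > 0" using d10 by (simp add: L_def)
  define h where "h = L / (K + K')"
  have hp: "h > 0" using Lp Kp Kp' by (simp add: h_def)
  have hw: "h < w / 2" using Lw Kp Kp' by (simp add: h_def field_simps)
  have Lh: "L = h * K + h * K'"
  proof -
    have "h * K + h * K' = h * (K + K')" by (simp add: algebra_simps)
    also have "\<dots> = L" unfolding h_def using Kp Kp' by simp
    finally show ?thesis by simp
  qed
  define u where "u = sgn (v1 - v0)"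
  have u1: "cmod u = 1" using d10 by (simp add: u_def norm_sgn)
  have v10: "v1 - v0 = of_real L * u" unfolding L_def u_def by (rule sgn_decomp)
  have spv: "sgn (v0 - vp) = u * cis (- t)"
  proof -
    have "u = sgn (v0 - vp) * cis t" unfolding u_def tt
      by (rule sgn_turn) (use d10 d0p in auto)
    then have "u * cis (- t) = sgn (v0 - vp) * (cis t * cis (- t))" by (simp add: ac_simps)
    also have "cis t * cis (- t) = 1" by (simp add: cis_mult)
    finally show ?thesis by simp
  qed
  have s21: "sgn (v2 - v1) = u * cis t'"
    unfolding u_def tt' by (rule sgn_turn) (use d10 d21 in auto)
  define A where "A = Complex (h * K) (- h * s)"
  define X where "X = v0 + u * A"
  have bis0: "bisector n p i = u * (1 - cis (- t))"
  proof -
    have "sgn (vp - v0) = - sgn (v0 - vp)" by (metis minus_diff_eq sgn_minus)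
    then show ?thesis unfolding bisector_def pv nv v0_def[symmetric] u_def[symmetric] spv
      by (simp add: algebra_simps)
  qed
  have X1: "X \<in> fold_line n p i"
  proof -
    have "inner (X - vtx n p i) (bisector n p i) = Re (u * A * cnj (u * (1 - cis (- t))))"
      unfolding bis0 X_def v0_def[symmetric] by (simp add: inner_complex_def algebra_simps)
    also have "\<dots> = Re (A * cnj (1 - cis (- t)))" by (rule unit_re[OF u1])
    also have "\<dots> = h * (K * (1 - cos (2 * c))) - h * (s * s) * sin (2 * c)"
      unfolding A_def using cost by (simp add: algebra_simps)
    also have "\<dots> = 0" using id1 ss by simp
    finally show ?thesis unfolding fold_line_def by simp
  qed
  have X2: "infdist X (affine hull {prev_vtx n p i, vtx n p i}) < w / 2"
  proof -
    define m where "m = cmod (v0 - vp)"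
    have mp: "m > 0" using d0p by (simp add: m_def)
    define F where "F = v0 + u * cis (- t) * of_real (h * K)"
    have "F = vp + (1 + h * K / m) *\<^sub>R (v0 - vp)"
    proof -
      have "u * cis (- t) = (v0 - vp) / of_real m" unfolding spv[symmetric] m_def
        by (simp add: sgn_div_norm scaleR_conv_of_real divide_inverse mult.commute)
      then have "F = v0 + of_real (h * K) * ((v0 - vp) / of_real m)" unfolding F_def
        by (simp add: ac_simps)
      also have "\<dots> = vp + (1 + h * K / m) *\<^sub>R (v0 - vp)"
        unfolding scaleR_conv_of_real using mp by (simp add: algebra_simps)
      finally show ?thesis .
    qed
    then have Fin: "F \<in> affine hull {vp, v0}" unfolding affine_hull_2_alt by auto
    have "X - F = u * (A - cis (- t) * of_real (h * K))" unfolding X_def F_def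
      by (simp add: algebra_simps)
    then have "dist X F = cmod (A - cis (- t) * of_real (h * K))"
      by (simp add: dist_norm unit_norm[OF u1])
    also have "A - cis (- t) * of_real (h * K) = Complex (h * (K * (1 - cos (2 * c)))) (h * s * (K * sin (2 * c) - 1))"
      unfolding A_def using cost by (simp add: complex_eq_iff algebra_simps)
    also have "\<dots> = Complex (h * sin (2 * c)) (h * s * cos (2 * c))" using id1 by simp
    also have "cmod \<dots> = h"
    proof -
      have "(h * sin (2 * c))^2 + (h * s * cos (2 * c))^2 = h^2 * (s * s) * (cos (2*c))^2 + h^2 * (sin (2*c))^2"
        by (simp add: power2_eq_square algebra_simps)
      also have "\<dots> = h^2 * ((cos (2*c))^2 + (sin (2*c))^2)" using ss by (simp only: distrib_left mult_1_right)
      also have "\<dots> = h^2" by simp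
      finally show ?thesis using hp by (simp add: cmod_def)
    qed
    finally have "dist X F = h" .
    then have "infdist X (affine hull {vp, v0}) \<le> h" using infdist_le[OF Fin, of X] by simp
    then show ?thesis using hw unfolding pv v0_def[symmetric] by simp
  qed
  have bis1: "bisector n p i' = u * (cis t' - 1)"
  proof -
    have "sgn (v0 - v1) = - u" unfolding u_def by (metis minus_diff_eq sgn_minus)
    then show ?thesis unfolding bisector_def pi' ni' vi' s21 by (simp add: algebra_simps)
  qed
  have X3: "X \<in> fold_line n p i'"
  proof -
    have e: "X - v1 = u * Complex (- h * K') (- h * s)"
    proof -
      have "X - v1 = u * A - (v1 - v0)" unfolding X_def by simp
      also have "\<dots> = u * (A - of_real L)" unfolding v10 by (simp add: algebra_simps)
      also have "A - of_real L = Complex (- h * K') (- h * s)" unfolding A_def Lh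
        by (simp add: complex_eq_iff)
      finally show ?thesis .
    qed
    have "inner (X - vtx n p i') (bisector n p i') = Re (u * Complex (- h * K') (- h * s) * cnj (u * (cis t' - 1)))"
      unfolding bis1 vi' e by (simp add: inner_complex_def algebra_simps)
    also have "\<dots> = Re (Complex (- h * K') (- h * s) * cnj (cis t' - 1))" by (rule unit_re[OF u1])
    also have "\<dots> = h * (K' * (1 - cos (2 * c'))) - h * (s * s) * sin (2 * c')"
      using cost' by (simp add: algebra_simps)
    also have "\<dots> = 0" using id1' ss by simp
    finally show ?thesis unfolding fold_line_def by simp
  qed
  have X4: "infdist X (affine hull {prev_vtx n p i', vtx n p i'}) < w / 2"
  proof -
    define G where "G = v0 + u * of_real (h * K)"
    have "G = v0 + (h * K / L) *\<^sub>R (v1 - v0)"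
      unfolding G_def v10 using Lp by (simp add: scaleR_conv_of_real field_simps)
    then have Gin: "G \<in> affine hull {v0, v1}" unfolding affine_hull_2_alt by auto
    have "X - G = u * Complex 0 (- h * s)" unfolding X_def G_def A_def
      by (simp add: algebra_simps complex_eq_iff)
    then have "dist X G = cmod (Complex 0 (- h * s))"
      by (simp add: dist_norm unit_norm[OF u1])
    also have "\<dots> = h" using s hp by (auto simp: cmod_def)
    finally have "dist X G = h" .
    then have "infdist X (affine hull {v0, v1}) \<le> h" using infdist_le[OF Gin, of X] by simp
    then show ?thesis using hw unfolding pi' vi' by simp
  qed
  have ne: "i \<noteq> i'"
  proof
    assume "i = i'"
    then have "Suc i mod n = i" by (simp add: i'_def)
    show False
    proof (cases "Suc i < n")
      case True then show False using \<open>Suc i mod n = i\<close> by simp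
    next
      case False
      then have "Suc i = n" using i by simp
      then have "Suc i mod n = 0" by simp
      then show False using \<open>Suc i mod n = i\<close> \<open>Suc i = n\<close> n by simp
    qed
  qed
  have "fold_segment n p w i \<inter> fold_segment n p w i' = {}"
    using fr ne i i'n unfolding folded_ribbon_def by blast
  moreover have "X \<in> fold_segment n p w i" using X1 X2 unfolding fold_segment_def by simp
  moreover have "X \<in> fold_segment n p w i'" using X3 X4 unfolding fold_segment_def by simp
  ultimately show False by blast
qed

lemma dcos_le_sin: "0 \<le> d \<Longrightarrow> d < pi/2 \<Longrightarrow> d * cos d \<le> sin (d::real)"
proof -
  assume d: "0 \<le> d" "d < pi/2"
  have cp: "cos d > 0" using d by (intro cos_gt_zero_pi) auto
  have "\<bar>d\<bar> \<le> \<bar>tan d\<bar>" using d by (intro abs_tan_ge) auto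
  moreover have "tan d \<ge> 0"
  proof -
    have "sin d \<ge> 0" using d by (intro sin_ge_zero) auto
    then show ?thesis using cp by (simp add: tan_def)
  qed
  ultimately have "d \<le> sin d / cos d" using d by (simp add: tan_def)
  then show ?thesis using cp by (simp add: field_simps)
qed

lemma cot_key:
  assumes x: "0 < x" "x < pi/2" and a: "0 < a" "a < pi/2"
  shows "(a - x) * sin x \<le> sin (a - x) * sin (a::real)"
proof (cases "x \<le> a")
  case True
  define d where "d = a - x"
  have d: "0 \<le> d" "d < pi/2" using True x a by (auto simp: d_def)
  have sx: "sin x = sin a * cos d - cos a * sin d"
  proof -
    have "x = a - d" by (simp add: d_def)
    then show ?thesis by (simp add: sin_diff)
  qed
  have h1: "d * cos d \<le> sin d" by (rule dcos_le_sin[OF d])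
  have sa: "sin a \<ge> 0" using a by (intro sin_ge_zero) auto
  have ca: "cos a \<ge> 0" using a by (intro cos_ge_zero) auto
  have sd: "sin d \<ge> 0" using d by (intro sin_ge_zero) auto
  have "sin a * (d * cos d) \<le> sin a * sin d" using h1 sa by (rule mult_left_mono)
  moreover have "0 \<le> d * cos a * sin d" using d ca sd by simp
  ultimately show ?thesis unfolding sx d_def[symmetric] by (simp add: algebra_simps)
next
  case False
  define e where "e = x - a"
  have e: "0 < e" "e < pi/2 - a" using False x a by (auto simp: e_def)
  have sx: "sin x = sin a * cos e + cos a * sin e"
  proof -
    have "x = a + e" by (simp add: e_def)
    then show ?thesis by (simp add: sin_add)
  qed
  have sa: "sin a \<ge> 0" using a by (intro sin_ge_zero) auto
  have se: "sin e \<ge> 0" using e a by (intro sin_ge_zero) auto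
  have ce: "cos e \<ge> 0" using e a by (intro cos_ge_zero) auto
  have ce1: "cos e \<le> 1" by simp
  have c_ge: "sin e \<le> cos a"
  proof -
    have "sin e \<le> sin (pi/2 - a)" using e a by (intro sin_monotone_2pi_le) auto
    then show ?thesis by (simp add: sin_cos_eq)
  qed
  have s_le: "sin a \<le> cos e"
  proof -
    have "cos (pi/2 - a) \<le> cos e" using e a by (intro cos_monotone_0_pi_le) auto
    then show ?thesis by (simp add: cos_sin_eq)
  qed
  have h0: "e * cos e \<le> sin e" using dcos_le_sin[of e] e a by auto
  have sle: "sin e \<le> e" using e by (intro sin_x_le_x) auto
  have h1: "e * sin e * sin e \<le> e * sin e * cos a"
    using c_ge e se by (intro mult_left_mono) auto
  have h2: "sin a * (sin e - e * cos e) \<le> cos e * (sin e - e * cos e)"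
    using s_le h0 by (intro mult_right_mono) auto
  have h3: "(sin e)^2 + (cos e)^2 = 1" by simp
  have h4: "sin e * cos e \<le> sin e" using se ce1 by (simp add: mult_left_le)
  have "sin e * sin a \<le> e * sin x"
  proof -
    have "e * sin x - sin e * sin a = e * sin e * cos a - sin a * (sin e - e * cos e)"
      unfolding sx by (simp add: algebra_simps)
    also have "\<dots> \<ge> e * sin e * sin e - cos e * (sin e - e * cos e)" using h1 h2 by linarith
    also have "e * sin e * sin e - cos e * (sin e - e * cos e) = e - sin e * cos e"
    proof -
      have h3': "sin e * sin e = 1 - cos e * cos e" using h3 by (simp add: power2_eq_square)
      have "e * sin e * sin e = e * (sin e * sin e)" by simp
      then show ?thesis unfolding h3' by (simp add: algebra_simps)
    qed
    finally show ?thesis using h4 sle by linarith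
  qed
  moreover have "sin (a - x) = - sin e" by (simp add: e_def flip: sin_minus)
  ultimately show ?thesis by (simp add: e_def algebra_simps)
qed

lemma cot_tangent:
  assumes x: "0 < x" "x < pi/2" and a: "0 < a" "a < pi/2"
  shows "cot a - (x - a) / (sin a)^2 \<le> cot (x::real)"
proof -
  have sa: "sin a > 0" using a by (intro sin_gt_zero) auto
  have sx: "sin x > 0" using x by (intro sin_gt_zero) auto
  have diff: "cot x - cot a = sin (a - x) / (sin x * sin a)"
    using sa sx by (simp add: cot_def sin_diff field_simps)
  have "(a - x) / (sin a)^2 = ((a - x) * sin x) / (sin x * (sin a)^2)"
    using sx by simp
  also have "\<dots> \<le> (sin (a - x) * sin a) / (sin x * (sin a)^2)"
    using cot_key[OF x a] sx sa by (intro divide_right_mono) auto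
  also have "\<dots> = sin (a - x) / (sin x * sin a)" using sa by (simp add: power2_eq_square)
  finally have "(a - x) / (sin a)^2 \<le> cot x - cot a" using diff by simp
  moreover have "(x - a) / (sin a)^2 = - ((a - x) / (sin a)^2)" by (simp add: diff_divide_distrib)
  ultimately show ?thesis by linarith
qed

lemma cot_sum:
  fixes c :: "nat \<Rightarrow> real"
  assumes n: "n \<ge> 3" and cb: "\<And>i. i < n \<Longrightarrow> 0 < c i \<and> c i < pi/2"
    and cs: "(\<Sum>i<n. c i) = pi"
  shows "real n * cot (pi / real n) \<le> (\<Sum>i<n. cot (c i))"
proof -
  define a where "a = pi / real n"
  have a: "0 < a" "a < pi/2" using n by (auto simp: a_def field_simps)
  have "(\<Sum>i<n. cot a - (c i - a) / (sin a)^2) \<le> (\<Sum>i<n. cot (c i))"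
    using cot_tangent cb a by (intro sum_mono) auto
  moreover have "(\<Sum>i<n. cot a - (c i - a) / (sin a)^2) = real n * cot a - ((\<Sum>i<n. c i) - real n * a) / (sin a)^2"
    by (simp add: sum_subtractf sum_divide_distrib[symmetric])
  moreover have "(\<Sum>i<n. c i) - real n * a = 0" using cs n by (simp add: a_def)
  ultimately show ?thesis by (simp add: a_def)
qed

lemma lower_bound:
  assumes n: "n \<ge> 4" and ad: "admissible n p" and fr: "folded_ribbon n p w"
  shows "real n * cot (pi / real n) \<le> ribbonlength n p w"
proof -
  have sp: "simple_polygon n p" and nd: "nondegenerate n p"
    and ang: "\<And>i. i < n \<Longrightarrow> pi / 2 \<le> interior_angle n p i \<and> interior_angle n p i < pi"
    using ad unfolding admissible_def by auto
  have wp: "w > 0" using fr unfolding folded_ribbon_def by simp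
  define s where "s = sgn (signed_area n p)"
  define t where "t i = turning_angle n p i" for i
  have ia: "interior_angle n p i = pi - s * t i" for i
    by (simp add: interior_angle_def s_def t_def)
  have s: "s = 1 \<or> s = -1"
  proof -
    have "s \<noteq> 0"
    proof
      assume "s = 0"
      then have "interior_angle n p 0 = pi" using ia by simp
      then show False using ang[of 0] n by simp
    qed
    then show ?thesis unfolding s_def by (auto simp: sgn_if split: if_splits)
  qed
  have tb: "0 < s * t i \<and> s * t i \<le> pi / 2" if "i < n" for i
    using ang[OF that] unfolding ia by auto
  have tot: "s * (\<Sum>i<n. t i) = 2 * pi"
    unfolding t_def by (rule turning_total[OF n sp nd s]) (use tb t_def in auto)
  define c where "c i = s * t i / 2" for i
  have cs: "(\<Sum>i<n. c i) = pi"
  proof -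
    have "(\<Sum>i<n. c i) = (s * (\<Sum>i<n. t i)) / 2"
      unfolding c_def by (simp add: sum_divide_distrib[symmetric] sum_distrib_left)
    then show ?thesis using tot by simp
  qed
  have cb: "0 < c i \<and> c i < pi/2" if "i < n" for i
    using tb[OF that] unfolding c_def by auto
  have fb: "w / 2 * (cot (c i) + cot (c (Suc i mod n))) \<le> cmod (next_vtx n p i - vtx n p i)"
    if i: "i < n" for i
  proof -
    have i2: "Suc i mod n < n" using n by simp
    show ?thesis unfolding c_def t_def
      by (rule fold_bound) (use n fr nd s i tb[OF i] tb[OF i2] in \<open>auto simp: t_def\<close>)
  qed
  have "(\<Sum>i<n. w / 2 * (cot (c i) + cot (c (Suc i mod n)))) \<le> polygon_length n p"
    unfolding polygon_length_def using fb by (intro sum_mono) auto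
  moreover have "(\<Sum>i<n. w / 2 * (cot (c i) + cot (c (Suc i mod n))))
      = w / 2 * ((\<Sum>i<n. cot (c i)) + (\<Sum>i<n. cot (c (Suc i mod n))))"
    by (simp only: sum_distrib_left[symmetric] sum.distrib)
  moreover have "(\<Sum>i<n. cot (c (Suc i mod n))) = (\<Sum>i<n. cot (c i))"
    using sum_rotate[of n "\<lambda>i. cot (c i)" 1] n by simp
  ultimately have "w * (\<Sum>i<n. cot (c i)) \<le> polygon_length n p" by simp
  then have "(\<Sum>i<n. cot (c i)) \<le> ribbonlength n p w"
    unfolding ribbonlength_def using wp by (simp add: field_simps)
  moreover have "real n * cot (pi / real n) \<le> (\<Sum>i<n. cot (c i))"
    by (rule cot_sum) (use n cb cs in auto)
  ultimately show ?thesis by linarith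
qed

lemma cis_diff: "cis (x - y) = cis x * cis (- y)"
  by (simp add: cis_mult)

lemma cis_add_int: "m \<in> \<int> \<Longrightarrow> cis (x + 2 * pi * m) = cis x"
  by (simp add: cis_mult[symmetric])

lemma reg_rep:
  assumes n: "n > 0" and reg: "regular_polygon n p"
  obtains c r \<theta> \<sigma> where "r > 0" "\<sigma> = 1 \<or> \<sigma> = -1"
    "\<And>k. vtx n p k = c + of_real r * cis (\<theta> + \<sigma> * 2 * pi * real k / real n)"
proof -
  obtain c r \<theta> \<sigma> where r: "r > 0" and s: "\<sigma> = 1 \<or> \<sigma> = -1"
    and P: "\<forall>i<n. p i = c + complex_of_real r * cis (\<theta> + \<sigma> * 2 * pi * real i / real n)"
    using reg unfolding regular_polygon_def by auto
  have "vtx n p k = c + of_real r * cis (\<theta> + \<sigma> * 2 * pi * real k / real n)" for k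
  proof -
    have km: "k mod n < n" using n by simp
    have kk: "real k = real (k div n) * real n + real (k mod n)"
      by (metis div_mult_mod_eq of_nat_add of_nat_mult)
    have eq: "\<theta> + \<sigma> * 2 * pi * real k / real n
        = (\<theta> + \<sigma> * 2 * pi * real (k mod n) / real n) + 2 * pi * (\<sigma> * real (k div n))"
      using n unfolding kk by (simp add: field_simps)
    have mi: "\<sigma> * real (k div n) \<in> \<int>" using s by auto
    have "cis (\<theta> + \<sigma> * 2 * pi * real k / real n)
       = cis ((\<theta> + \<sigma> * 2 * pi * real (k mod n) / real n) + 2 * pi * (\<sigma> * real (k div n)))"
      by (rule arg_cong[where f=cis]) (rule eq)
    also have "\<dots> = cis (\<theta> + \<sigma> * 2 * pi * real (k mod n) / real n)"
      by (rule cis_add_int[OF mi])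
    finally have "cis (\<theta> + \<sigma> * 2 * pi * real k / real n) = cis (\<theta> + \<sigma> * 2 * pi * real (k mod n) / real n)" .
    then show ?thesis using P km by (simp add: vtx_def)
  qed
  then show ?thesis using that r s by blast
qed

locale regpoly =
  fixes n :: nat and p :: "nat \<Rightarrow> complex" and c :: complex and r \<theta> \<sigma> :: real
  assumes n: "n \<ge> 4" and r: "r > 0" and s: "\<sigma> = 1 \<or> \<sigma> = -1"
    and V: "\<And>k. vtx n p k = c + of_real r * cis (\<theta> + \<sigma> * 2 * pi * real k / real n)"
begin

definition "\<phi> k = \<theta> + \<sigma> * 2 * pi * real k / real n"
definition "\<beta> = \<sigma> * 2 * pi / real n"
definition "\<omega> = cis \<beta>"

lemma V': "vtx n p k = c + of_real r * cis (\<phi> k)"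
  using V by (simp add: \<phi>_def)

lemma np: "real n > 0" using n by simp

lemma phi_Suc: "\<phi> (Suc k) = \<phi> k + \<beta>"
  unfolding \<phi>_def \<beta>_def using np by (simp add: field_simps)

lemma phi_prev: "cis (\<phi> (k + n - 1)) = cis (\<phi> k - \<beta>)"
proof -
  have "real (k + n - 1) = real k + real n - 1" using n by simp
  then have "\<phi> (k + n - 1) = (\<phi> k - \<beta>) + 2 * pi * \<sigma>"
    unfolding \<phi>_def \<beta>_def using np by (simp add: field_simps)
  moreover have "\<sigma> \<in> \<int>" using s by auto
  ultimately show ?thesis using cis_add_int by simp
qed

lemma edge_form: "vtx n p (Suc k) - vtx n p k = of_real r * cis (\<phi> k) * (\<omega> - 1)"
  unfolding V' phi_Suc \<omega>_def by (simp add: cis_mult[symmetric] algebra_simps)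

lemma prev_form: "vtx n p k - vtx n p (k + n - 1) = of_real r * cis (\<phi> k) * (1 - cis (- \<beta>))"
  unfolding V' phi_prev cis_diff by (simp add: algebra_simps)

lemma beta_bounds: "\<bar>\<beta>\<bar> \<le> pi / 2" "\<bar>\<beta>\<bar> = 2 * pi / real n"
  using s n np by (auto simp: \<beta>_def field_simps)

lemma Arg_omega: "Arg \<omega> = \<beta>"
proof -
  have "- \<beta> \<le> pi/2" "\<beta> \<le> pi/2" using beta_bounds(1) by linarith+
  moreover have "0 < pi" by (rule pi_gt_zero)
  ultimately have "- pi < \<beta>" "\<beta> \<le> pi" by linarith+
  then have "\<beta> \<in> {-pi<..pi}" by auto
  then show ?thesis unfolding \<omega>_def by (rule Arg_cis)
qed

lemma beta_ne0: "\<beta> \<noteq> 0" using s np by (auto simp: \<beta>_def)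

lemma omega_ne1: "\<omega> \<noteq> 1"
  using Arg_omega beta_ne0 by auto

lemma edge_ne: "vtx n p (Suc k) \<noteq> vtx n p k"
  using edge_form[of k] omega_ne1 r by auto

lemma turning: "turning_angle n p k = \<beta>"
proof -
  have "(\<omega> - 1) = \<omega> * (1 - cis (- \<beta>))" unfolding \<omega>_def
    by (simp add: algebra_simps cis_mult)
  moreover have "1 - cis (- \<beta>) \<noteq> 0"
  proof
    assume "1 - cis (- \<beta>) = 0"
    then have "\<omega> - 1 = 0" using \<open>\<omega> - 1 = _\<close> by simp
    then show False using omega_ne1 by simp
  qed
  ultimately have "(vtx n p (Suc k) - vtx n p k) / (vtx n p k - vtx n p (k + n - 1)) = \<omega>"
    unfolding edge_form prev_form using r by (simp add: field_simps)
  then show ?thesis unfolding turning_vtx Arg_omega[symmetric] by simp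
qed

end

context regpoly begin

lemma phi_lin: "\<phi> i = \<theta> + real i * \<beta>"
  unfolding \<phi>_def \<beta>_def by (simp add: field_simps)

lemma cis_phi: "cis (\<phi> i) = cis \<theta> * \<omega> ^ i"
  unfolding phi_lin \<omega>_def Complex.DeMoivre by (simp add: cis_mult)

lemma omega_n: "\<omega> ^ n = 1"
proof -
  have "\<omega> ^ n = cis (2 * pi * \<sigma>)" unfolding \<omega>_def Complex.DeMoivre \<beta>_def using np
    by (simp add: field_simps)
  moreover have "\<sigma> \<in> \<int>" using s by auto
  ultimately show ?thesis by simp
qed

lemma sum_cis_phi: "(\<Sum>i<n. cis (\<phi> i)) = 0"
proof -
  have "(\<Sum>i<n. cis (\<phi> i)) = cis \<theta> * (\<Sum>i<n. \<omega> ^ i)"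
    unfolding cis_phi by (simp add: sum_distrib_left)
  also have "(\<Sum>i<n. \<omega> ^ i) = 0"
    using omega_ne1 omega_n by (simp add: sum_gp_strict)
  finally show ?thesis by simp
qed

lemma next_form: "vtx n p (Suc k) = c + of_real r * cis (\<phi> k) * \<omega>"
  unfolding V' phi_Suc \<omega>_def by (simp add: cis_mult)

lemma area: "signed_area n p = real n * r^2 * sin \<beta> / 2"
proof -
  define z where "z i = cis (\<phi> i)" for i
  have zz: "cnj (z i) * z i = 1" for i unfolding z_def by (simp add: cis_cnj cis_mult)
  have tm: "cnj (vtx n p i) * next_vtx n p i
      = cnj c * c + of_real r * cnj c * \<omega> * z i + of_real r * c * cnj (z i) + of_real (r^2) * \<omega>" for i
  proof -
    have "cnj (vtx n p i) * next_vtx n p i = (cnj c + of_real r * cnj (z i)) * (c + of_real r * z i * \<omega>)"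
      unfolding next_vtx_eq next_form unfolding V' z_def by simp
    also have "\<dots> = cnj c * c + of_real r * cnj c * \<omega> * z i + of_real r * c * cnj (z i)
        + of_real r * of_real r * \<omega> * (cnj (z i) * z i)"
      by (simp add: algebra_simps)
    finally show ?thesis using zz by (simp add: power2_eq_square)
  qed
  have sz: "(\<Sum>i<n. z i) = 0" unfolding z_def by (rule sum_cis_phi)
  have scz: "(\<Sum>i<n. cnj (z i)) = 0" using sz by (metis cnj_sum complex_cnj_zero)
  have "(\<Sum>i<n. cnj (vtx n p i) * next_vtx n p i)
      = of_nat n * (cnj c * c) + of_real r * cnj c * \<omega> * (\<Sum>i<n. z i)
        + of_real r * c * (\<Sum>i<n. cnj (z i)) + of_nat n * of_real (r^2) * \<omega>"
    unfolding tm by (simp add: sum.distrib sum_distrib_left)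
  also have "\<dots> = of_nat n * (cnj c * c) + of_nat n * of_real (r^2) * \<omega>" using sz scz by simp
  finally have S: "(\<Sum>i<n. cnj (vtx n p i) * next_vtx n p i) = of_nat n * (cnj c * c) + of_nat n * of_real (r^2) * \<omega>" .
  have "signed_area n p = Im (\<Sum>i<n. cnj (vtx n p i) * next_vtx n p i) / 2"
    unfolding signed_area_def by (simp add: Im_sum)
  also have "\<dots> = real n * r^2 * sin \<beta> / 2" unfolding S \<omega>_def by simp
  finally show ?thesis .
qed

lemma sin_beta: "sin \<beta> = \<sigma> * sin (2 * pi / real n)"
  using s unfolding \<beta>_def by (auto simp: field_simps)

lemma sin2pn: "sin (2 * pi / real n) > 0"
proof -
  have "2 * pi / real n < pi" using n np by (simp add: field_simps)
  then show ?thesis using np by (intro sin_gt_zero) auto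
qed

lemma sgn_area: "sgn (signed_area n p) = \<sigma>"
proof -
  have pos: "real n * r^2 * sin (2 * pi / real n) / 2 > 0" using np r sin2pn by simp
  have "signed_area n p = \<sigma> * (real n * r^2 * sin (2 * pi / real n) / 2)"
    unfolding area sin_beta by (simp add: algebra_simps)
  then show ?thesis using s pos by (auto simp: sgn_if)
qed

lemma interior: "interior_angle n p k = pi - 2 * pi / real n"
  unfolding interior_angle_def sgn_area turning using s by (auto simp: \<beta>_def)

lemma interior_bounds: "pi / 2 \<le> interior_angle n p k" "interior_angle n p k < pi"
proof -
  have "2 * pi / real n \<le> pi / 2" using n np by (simp add: field_simps)
  moreover have "2 * pi / real n > 0" using np by simp
  ultimately show "pi / 2 \<le> interior_angle n p k" "interior_angle n p k < pi"
    unfolding interior by linarith+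
qed

lemma nondeg: "nondegenerate n p"
  unfolding nondegenerate_def next_vtx_eq using edge_ne interior_bounds(2)
  by (metis less_irrefl)

end

lemma cos_pn_strict:
  assumes n: "n \<ge> 3" and q: "3 \<le> \<bar>q\<bar>" "\<bar>q\<bar> \<le> 2 * real n - 3"
  shows "cos (q * pi / real n) < cos (pi / real n)"
proof -
  have np: "real n > 0" using n by simp
  define x where "x = \<bar>q\<bar> * pi / real n"
  have cx: "cos (q * pi / real n) = cos x"
    unfolding x_def by (cases "q \<ge> 0") (auto simp: abs_if minus_divide_left[symmetric])
  have "1 * pi < \<bar>q\<bar> * pi" using q pi_gt_zero by (intro mult_strict_right_mono) auto
  then have x1: "pi / real n < x" using np unfolding x_def by (intro divide_strict_right_mono) auto
  have "\<bar>q\<bar> * pi \<le> (2 * real n - 3) * pi" using q pi_gt_zero by (intro mult_right_mono) auto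
  then have "x \<le> (2 * real n - 3) * pi / real n" using np unfolding x_def by (intro divide_right_mono) auto
  also have "\<dots> = 2 * pi - 3 * pi / real n" using np by (simp add: field_simps)
  finally have x2: "x \<le> 2 * pi - 3 * pi / real n" .
  have pn: "0 \<le> pi / real n" using np by simp
  show ?thesis
  proof (cases "x \<le> pi")
    case True
    then show ?thesis unfolding cx using x1 pn by (intro cos_monotone_0_pi) auto
  next
    case False
    have "cos x = cos (2 * pi - x)" by (simp add: cos_diff)
    moreover have "cos (2 * pi - x) < cos (pi / real n)"
    proof (intro cos_monotone_0_pi)
      show "0 \<le> pi / real n" by (rule pn)
      have "3 * pi / real n > pi / real n" using np by (simp add: field_simps)
      then show "pi / real n < 2 * pi - x" using x2 by linarith
      show "2 * pi - x \<le> pi" using False by linarith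
    qed
    ultimately show ?thesis unfolding cx by simp
  qed
qed

lemma cos_pn_eq:
  assumes n: "n \<ge> 1" and q: "\<bar>q\<bar> = 1 \<or> \<bar>q\<bar> = 2 * real n - 1"
  shows "cos (q * pi / real n) = cos (pi / real n)"
proof -
  have np: "real n > 0" using n by simp
  have c1: "cos (q * pi / real n) = cos (\<bar>q\<bar> * pi / real n)"
    by (cases "q \<ge> 0") (auto simp: abs_if minus_divide_left[symmetric])
  show ?thesis
  proof (cases "\<bar>q\<bar> = 1")
    case True then show ?thesis unfolding c1 by simp
  next
    case False
    then have "\<bar>q\<bar> = 2 * real n - 1" using q by simp
    then have "\<bar>q\<bar> * pi / real n = (2 * real n - 1) * pi / real n" by simp
    also have "\<dots> = 2 * pi - pi / real n" using np by (simp add: field_simps)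
    finally have "\<bar>q\<bar> * pi / real n = 2 * pi - pi / real n" .
    then show ?thesis unfolding c1 by (simp add: cos_diff)
  qed
qed

lemma conv_lt: "0 \<le> (u::real) \<Longrightarrow> u \<le> 1 \<Longrightarrow> a < M \<Longrightarrow> b < M \<Longrightarrow> (1 - u) * a + u * b < M"
proof -
  assume u: "0 \<le> u" "u \<le> 1" and ab: "a < M" "b < M"
  show ?thesis
  proof (cases "u = 1")
    case True then show ?thesis using ab by simp
  next
    case False
    then have "(1 - u) * a < (1 - u) * M" using u ab by (intro mult_strict_left_mono) auto
    moreover have "u * b \<le> u * M" using u ab by (intro mult_left_mono) auto
    ultimately show ?thesis by (simp add: algebra_simps)
  qed
qed

context regpoly begin

definition "f i z = Re ((z - c) * cnj (cis (\<phi> i + \<beta> / 2)))"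

lemma f_seg:
  assumes "z \<in> closed_segment a b"
  obtains u where "0 \<le> u" "u \<le> 1" "z = (1 - u) *\<^sub>R a + u *\<^sub>R b" "f i z = (1 - u) * f i a + u * f i b"
proof -
  obtain u where u: "0 \<le> u" "u \<le> 1" "z = (1 - u) *\<^sub>R a + u *\<^sub>R b"
    using assms unfolding closed_segment_def by auto
  have "f i z = (1 - u) * f i a + u * f i b"
    unfolding f_def u(3) scaleR_conv_of_real by (simp add: algebra_simps)
  then show ?thesis using u that by blast
qed

lemma fV: "f i (vtx n p k) = r * cos ((2 * real k - 2 * real i - 1) * pi / real n)"
proof -
  have "(vtx n p k - c) * cnj (cis (\<phi> i + \<beta> / 2)) = of_real r * cis (\<phi> k - (\<phi> i + \<beta> / 2))"
    unfolding V' cis_diff[of "\<phi> k"] by (simp add: cis_cnj)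
  moreover have "\<phi> k - (\<phi> i + \<beta> / 2) = \<sigma> * ((2 * real k - 2 * real i - 1) * pi / real n)"
    unfolding \<phi>_def \<beta>_def using np by (simp add: field_simps)
  ultimately have "f i (vtx n p k) = r * cos (\<sigma> * ((2 * real k - 2 * real i - 1) * pi / real n))"
    unfolding f_def by simp
  then show ?thesis using s by auto
qed

definition "M = r * cos (pi / real n)"

lemma fV_cases:
  assumes i: "i < n" and k: "k \<le> n"
  shows "(k mod n = i \<or> k mod n = Suc i mod n) \<longrightarrow> f i (vtx n p k) = M"
    and "\<not> (k mod n = i \<or> k mod n = Suc i mod n) \<longrightarrow> f i (vtx n p k) < M"
proof -
  define q where "q = 2 * real k - 2 * real i - 1"
  have fq: "f i (vtx n p k) = r * cos (q * pi / real n)" unfolding fV q_def ..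
  have n1: "n \<ge> 3" "n \<ge> 1" using n by auto
  have eqc: "f i (vtx n p k) = M" if "\<bar>q\<bar> = 1 \<or> \<bar>q\<bar> = 2 * real n - 1"
    unfolding fq M_def using cos_pn_eq[OF n1(2) that] by simp
  have ltc: "f i (vtx n p k) < M" if "3 \<le> \<bar>q\<bar>" "\<bar>q\<bar> \<le> 2 * real n - 3"
    unfolding fq M_def using cos_pn_strict[OF n1(1) that] r by simp
  show "(k mod n = i \<or> k mod n = Suc i mod n) \<longrightarrow> f i (vtx n p k) = M"
  proof
    assume h: "k mod n = i \<or> k mod n = Suc i mod n"
    have "k = i \<or> k = Suc i \<or> (k = n \<and> i = 0) \<or> (k = 0 \<and> Suc i = n)"
    proof (cases "k = n")
      case True
      then show ?thesis using h i by (cases "Suc i = n") auto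
    next
      case False
      then have kn: "k < n" using k by simp
      then show ?thesis using h i by (cases "Suc i = n") auto
    qed
    then have "\<bar>q\<bar> = 1 \<or> \<bar>q\<bar> = 2 * real n - 1"
      unfolding q_def by (auto simp: abs_if)
    then show "f i (vtx n p k) = M" by (rule eqc)
  qed
  show "\<not> (k mod n = i \<or> k mod n = Suc i mod n) \<longrightarrow> f i (vtx n p k) < M"
  proof
    assume h: "\<not> (k mod n = i \<or> k mod n = Suc i mod n)"
    have a: "k \<noteq> i" "k \<noteq> Suc i" using h i n by auto
    have b: "\<not> (k = n \<and> i = 0)" using h by auto
    have c: "\<not> (k = 0 \<and> Suc i = n)" using h by auto
    have "3 \<le> \<bar>q\<bar> \<and> \<bar>q\<bar> \<le> 2 * real n - 3"
    proof (cases "i \<le> k")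
      case True
      then have "k \<ge> i + 2" using a by auto
      moreover have "k \<le> i + n - 1" using k b i a by (cases "i = 0") auto
      ultimately show ?thesis unfolding q_def using n by (auto simp: abs_if)
    next
      case False
      then have "k + 1 \<le> i" by auto
      moreover have "i \<le> k + n - 2" using c i by auto
      ultimately show ?thesis unfolding q_def using n by (auto simp: abs_if)
    qed
    then show "f i (vtx n p k) < M" using ltc by blast
  qed
qed

end

context regpoly begin

lemma edge_eq: "edge n p i = closed_segment (vtx n p i) (vtx n p (Suc i))"
  by (simp add: edge_def next_vtx_eq)

lemma edge_i_f: assumes i: "i < n" and z: "z \<in> edge n p i" shows "f i z = M"
proof -
  have a: "f i (vtx n p i) = M" using fV_cases(1)[of i i] i by simp
  have b: "f i (vtx n p (Suc i)) = M" using fV_cases(1)[of i "Suc i"] i by simp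
  obtain u where "f i z = (1 - u) * f i (vtx n p i) + u * f i (vtx n p (Suc i))"
    using f_seg[of z "vtx n p i" "vtx n p (Suc i)" i] z unfolding edge_eq by blast
  then show ?thesis using a b by (simp add: algebra_simps)
qed

lemma adj_edges:
  assumes i: "i < n"
  shows "edge n p i \<inter> edge n p (Suc i mod n) = {vtx n p (Suc i mod n)}"
proof -
  define j where "j = Suc i mod n"
  have jn: "j < n" using n by (simp add: j_def)
  have fj: "f i (vtx n p j) = M" using fV_cases(1)[of i j] i jn by (simp add: j_def)
  have nn: "\<not> (Suc j mod n = i \<or> Suc j mod n = Suc i mod n)"
  proof
    assume h: "Suc j mod n = i \<or> Suc j mod n = Suc i mod n"
    have sj: "Suc j mod n = (2 + i) mod n" unfolding j_def by (simp add: mod_Suc_eq)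
    show False
    proof (cases "Suc j mod n = i")
      case True
      then have "(2 + i) mod n = (0 + i) mod n" using sj i by simp
      then have "2 mod n = 0 mod n" by (rule mod_add_cancel_nat)
      then show False using n by simp
    next
      case False
      then have "(1 + Suc i) mod n = (0 + Suc i) mod n" using h sj by simp
      then have "1 mod n = 0 mod n" by (rule mod_add_cancel_nat)
      then show False using n by simp
    qed
  qed
  have fsj: "f i (vtx n p (Suc j)) < M" using fV_cases(2)[of i "Suc j"] i jn nn by simp
  show ?thesis unfolding j_def[symmetric]
  proof
    show "edge n p i \<inter> edge n p j \<subseteq> {vtx n p j}"
    proof
      fix z assume z: "z \<in> edge n p i \<inter> edge n p j"
      have fz: "f i z = M" using edge_i_f i z by blast
      obtain u where u: "0 \<le> u" "u \<le> 1" "z = (1 - u) *\<^sub>R vtx n p j + u *\<^sub>R vtx n p (Suc j)"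
        "f i z = (1 - u) * f i (vtx n p j) + u * f i (vtx n p (Suc j))"
        using f_seg[of z "vtx n p j" "vtx n p (Suc j)" i] z unfolding edge_eq by blast
      have "u * (M - f i (vtx n p (Suc j))) = 0" using u(4) fz fj by (simp add: algebra_simps)
      then have "u = 0" using fsj by simp
      then show "z \<in> {vtx n p j}" using u(3) by simp
    qed
  next
    have "vtx n p j \<in> edge n p j" unfolding edge_eq by simp
    moreover have "vtx n p j \<in> edge n p i" unfolding edge_eq j_def vtx_mod by simp
    ultimately show "{vtx n p j} \<subseteq> edge n p i \<inter> edge n p j" by simp
  qed
qed

lemma nonadj_edges:
  assumes i: "i < n" and j: "j < n" and ne: "i \<noteq> j" "j \<noteq> Suc i mod n" "i \<noteq> Suc j mod n"
  shows "edge n p i \<inter> edge n p j = {}"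
proof -
  have f1: "f i (vtx n p j) < M" using fV_cases(2)[of i j] i j ne by simp
  have "Suc j mod n \<noteq> Suc i mod n"
  proof
    assume "Suc j mod n = Suc i mod n"
    then have "(j + 1) mod n = (i + 1) mod n" by simp
    then have "j mod n = i mod n" by (rule mod_add_cancel_nat)
    then show False using i j ne by simp
  qed
  then have f2: "f i (vtx n p (Suc j)) < M" using fV_cases(2)[of i "Suc j"] i j ne by auto
  show ?thesis
  proof (rule ccontr)
    assume "edge n p i \<inter> edge n p j \<noteq> {}"
    then obtain z where z: "z \<in> edge n p i" "z \<in> edge n p j" by blast
    have fz: "f i z = M" using edge_i_f i z by blast
    obtain u where u: "0 \<le> u" "u \<le> 1"
        "f i z = (1 - u) * f i (vtx n p j) + u * f i (vtx n p (Suc j))"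
      using f_seg[of z "vtx n p j" "vtx n p (Suc j)" i] z unfolding edge_eq by blast
    have "f i z < M" unfolding u(3) using conv_lt[OF u(1,2) f1 f2] .
    then show False using fz by simp
  qed
qed

lemma simple: "simple_polygon n p"
  unfolding simple_polygon_def
proof (intro conjI allI impI)
  show "3 \<le> n" using n by simp
  fix i j assume i: "i < n" and j: "j < n" and ne: "i \<noteq> j"
  show "if j = Suc i mod n then edge n p i \<inter> edge n p j = {vtx n p j}
         else if i = Suc j mod n then edge n p i \<inter> edge n p j = {vtx n p i}
         else edge n p i \<inter> edge n p j = {}"
  proof (cases "j = Suc i mod n")
    case True then show ?thesis using adj_edges[OF i] by simp
  next
    case F: False
    show ?thesis
    proof (cases "i = Suc j mod n")
      case True
      then have "edge n p j \<inter> edge n p i = {vtx n p i}" using adj_edges[OF j] by simp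
      then show ?thesis using F True by (simp add: Int_commute)
    next
      case False
      then show ?thesis using F nonadj_edges[OF i j ne] by simp
    qed
  qed
qed

end

lemma infdist_ge:
  assumes "S \<noteq> {}" "\<And>z. z \<in> S \<Longrightarrow> d \<le> dist x z"
  shows "d \<le> infdist x S"
  unfolding infdist_def using assms by (auto intro: cINF_greatest)

lemma sin_cos_bounds:
  assumes n: "n \<ge> 3" and e: "1 \<le> e" "e \<le> real n - 1"
  shows "sin (pi / real n) \<le> sin (pi * e / real n)" "\<bar>cos (pi * e / real n)\<bar> \<le> cos (pi / real n)"
proof -
  have np: "real n > 0" using n by simp
  define x where "x = pi * e / real n"
  have "pi * 1 \<le> pi * e" using e pi_gt_zero by (intro mult_left_mono) auto
  then have x1: "pi / real n \<le> x" unfolding x_def using np by (intro divide_right_mono) auto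
  have "pi * e \<le> pi * (real n - 1)" using e pi_gt_zero by (intro mult_left_mono) auto
  then have "x \<le> pi * (real n - 1) / real n" unfolding x_def using np by (intro divide_right_mono) auto
  also have "\<dots> = pi - pi / real n" using np by (simp add: field_simps)
  finally have x2: "x \<le> pi - pi / real n" .
  have pn: "0 < pi / real n" "pi / real n \<le> pi / 2" using np n by (auto simp: field_simps)
  show "sin (pi / real n) \<le> sin (pi * e / real n)"
  proof (cases "x \<le> pi / 2")
    case True
    then show ?thesis unfolding x_def[symmetric] using x1 pn by (intro sin_monotone_2pi_le) auto
  next
    case False
    have "sin (pi / real n) \<le> sin (pi - x)" using x2 False pn by (intro sin_monotone_2pi_le) auto
    then show ?thesis unfolding x_def[symmetric] by simp
  qed
  have c1: "cos x \<le> cos (pi / real n)" using x1 x2 pn by (intro cos_monotone_0_pi_le) auto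
  have "cos (pi - x) \<le> cos (pi / real n)" using x1 x2 pn by (intro cos_monotone_0_pi_le) auto
  then have c2: "- cos x \<le> cos (pi / real n)" by simp
  show "\<bar>cos (pi * e / real n)\<bar> \<le> cos (pi / real n)" unfolding x_def[symmetric] using c1 c2 by auto
qed

lemma sgn_unit: "a > 0 \<Longrightarrow> cmod z = 1 \<Longrightarrow> sgn (complex_of_real a * z) = z"
proof -
  assume a: "a > 0" and z: "cmod z = 1"
  have "cmod (complex_of_real a * z) = a" using a z by (simp add: norm_mult)
  then have "sgn (complex_of_real a * z) = complex_of_real a * z / complex_of_real a"
    by (simp add: sgn_div_norm scaleR_conv_of_real divide_inverse mult.commute of_real_inverse)
  then show ?thesis using a by simp
qed

lemma cnj_cis_cis: "cnj (cis a) * cis a = 1"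
  by (simp add: cis_cnj cis_mult)

context regpoly begin

definition "\<kappa> = \<i> * of_real \<sigma> * cis (\<beta> / 2)"
definition "sp = sin (pi / real n)"

lemma sp_pos: "sp > 0"
proof -
  have "pi / real n < pi" using np n by (simp add: field_simps)
  then show ?thesis unfolding sp_def using np by (intro sin_gt_zero) auto
qed

lemma kappa_norm: "cmod \<kappa> = 1"
  using s by (auto simp: \<kappa>_def norm_mult)

lemma sin_half_beta: "sin (\<beta> / 2) = \<sigma> * sp"
  using s unfolding \<beta>_def sp_def by (auto simp: field_simps)

lemma omega_m1: "\<omega> - 1 = of_real (2 * sp) * \<kappa>"
proof -
  have "\<omega> - 1 = cis (\<beta> / 2) * (cis (\<beta> / 2) - cis (- (\<beta> / 2)))"
    unfolding \<omega>_def by (simp add: algebra_simps cis_mult)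
  also have "cis (\<beta> / 2) - cis (- (\<beta> / 2)) = 2 * \<i> * of_real (sin (\<beta> / 2))"
    by (simp add: complex_eq_iff)
  finally have "\<omega> - 1 = 2 * \<i> * of_real (sin (\<beta> / 2)) * cis (\<beta> / 2)" by (simp add: ac_simps)
  also have "\<dots> = of_real (2 * sp) * \<kappa>"
    unfolding sin_half_beta \<kappa>_def using s by auto
  finally show ?thesis .
qed

lemma edge_len: "cmod (vtx n p (Suc k) - vtx n p k) = 2 * r * sp"
  unfolding edge_form omega_m1 using r sp_pos kappa_norm by (simp add: norm_mult)

lemma plen: "polygon_length n p = real n * (2 * r * sp)"
  unfolding polygon_length_def next_vtx_eq edge_len by simp

lemma sgn_next: "sgn (vtx n p (Suc k) - vtx n p k) = cis (\<phi> k) * \<kappa>"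
proof -
  have e: "vtx n p (Suc k) - vtx n p k = complex_of_real (2 * r * sp) * (cis (\<phi> k) * \<kappa>)"
    unfolding edge_form omega_m1 by (simp add: ac_simps)
  have "cmod (cis (\<phi> k) * \<kappa>) = 1" using kappa_norm by (simp add: norm_mult)
  moreover have "2 * r * sp > 0" using r sp_pos by simp
  ultimately show ?thesis unfolding e by (rule sgn_unit[rotated])
qed

lemma prev_form2: "vtx n p k - vtx n p (k + n - 1) = complex_of_real (2 * r * sp) * (cis (\<phi> k) * cis (- \<beta>) * \<kappa>)"
proof -
  have "1 - cis (- \<beta>) = cis (- \<beta>) * (\<omega> - 1)" unfolding \<omega>_def by (simp add: algebra_simps cis_mult)
  then show ?thesis unfolding prev_form omega_m1 by (simp add: ac_simps)
qed

lemma sgn_prev: "sgn (vtx n p (k + n - 1) - vtx n p k) = - (cis (\<phi> k) * cis (- \<beta>) * \<kappa>)"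
proof -
  have e: "vtx n p (k + n - 1) - vtx n p k = complex_of_real (2 * r * sp) * (- (cis (\<phi> k) * cis (- \<beta>) * \<kappa>))"
    using prev_form2[of k] by (simp add: algebra_simps)
  have "cmod (- (cis (\<phi> k) * cis (- \<beta>) * \<kappa>)) = 1" using kappa_norm by (simp add: norm_mult)
  moreover have "2 * r * sp > 0" using r sp_pos by simp
  ultimately show ?thesis unfolding e by (rule sgn_unit[rotated])
qed

lemma bisector_reg: "bisector n p k = - of_real (2 * sp) * cis (\<phi> k)"
proof -
  have "\<kappa> * (1 - cis (- \<beta>)) = - of_real (2 * sp)"
  proof -
    have "\<kappa> * (1 - cis (- \<beta>)) = \<i> * of_real \<sigma> * (cis (\<beta> / 2) - cis (- (\<beta> / 2)))"
      unfolding \<kappa>_def by (simp add: algebra_simps cis_mult)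
    also have "cis (\<beta> / 2) - cis (- (\<beta> / 2)) = 2 * \<i> * of_real (sin (\<beta> / 2))"
      by (simp add: complex_eq_iff)
    finally show ?thesis unfolding sin_half_beta using s by auto
  qed
  moreover have "bisector n p k = cis (\<phi> k) * (\<kappa> * (1 - cis (- \<beta>)))"
    unfolding bisector_def prev_vtx_eq next_vtx_eq sgn_prev sgn_next by (simp add: algebra_simps)
  ultimately show ?thesis by simp
qed

definition "w0 = 2 * r * sp * tan (pi / real n)"

lemma cos_pn_pos: "cos (pi / real n) > 0"
proof -
  have "pi / real n < pi / 2" using np n by (simp add: field_simps)
  moreover have "0 < pi / real n" using np by simp
  ultimately show ?thesis by (intro cos_gt_zero_pi) auto
qed

lemma tan_pos: "tan (pi / real n) > 0"
  using cos_pn_pos sp_pos unfolding sp_def by (simp add: tan_def)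

lemma w0_pos: "w0 > 0" unfolding w0_def using r sp_pos tan_pos by simp

lemma fold_line_reg: "x \<in> fold_line n p k \<longleftrightarrow> Re ((x - c) * cnj (cis (\<phi> k))) = r"
proof -
  have "inner (x - vtx n p k) (bisector n p k) = - (2 * sp) * Re ((x - vtx n p k) * cnj (cis (\<phi> k)))"
    unfolding bisector_reg inner_complex_def by (simp add: algebra_simps)
  moreover have "Re ((x - vtx n p k) * cnj (cis (\<phi> k))) = Re ((x - c) * cnj (cis (\<phi> k))) - r"
    unfolding V' by (simp add: algebra_simps cis_cnj cis_mult)
  ultimately show ?thesis unfolding fold_line_def using sp_pos by auto
qed

lemma seg_y:
  assumes x: "x \<in> fold_segment n p w0 k"
  shows "\<bar>Im ((x - c) * cnj (cis (\<phi> k)))\<bar> < r * tan (pi / real n)"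
proof -
  define y where "y = Im ((x - c) * cnj (cis (\<phi> k)))"
  have fl: "Re ((x - c) * cnj (cis (\<phi> k))) = r" using x fold_line_reg unfolding fold_segment_def by auto
  have xd: "(x - c) * cnj (cis (\<phi> k)) = Complex r y" using fl by (simp add: y_def complex_eq_iff)
  have xV: "x - vtx n p k = cis (\<phi> k) * (\<i> * of_real y)"
  proof -
    have "x - c = (x - c) * (cnj (cis (\<phi> k)) * cis (\<phi> k))" by (simp add: cnj_cis_cis)
    also have "\<dots> = Complex r y * cis (\<phi> k)" unfolding xd[symmetric] by (simp add: ac_simps)
    finally have "x - c = Complex r y * cis (\<phi> k)" .
    moreover have "Complex r y - complex_of_real r = \<i> * of_real y" by (simp add: complex_eq_iff)
    ultimately have "x - vtx n p k = (Complex r y - complex_of_real r) * cis (\<phi> k)"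
      unfolding V' by (simp add: algebra_simps)
    then show ?thesis using \<open>Complex r y - complex_of_real r = _\<close> by (simp add: ac_simps)
  qed
  define d where "d = cis (\<phi> k) * cis (- \<beta>) * \<kappa>"
  have dn: "cmod d = 1" using kappa_norm by (simp add: d_def norm_mult)
  have lower: "\<bar>y\<bar> * sp \<le> infdist x (affine hull {prev_vtx n p k, vtx n p k})"
  proof (rule infdist_ge)
    show "affine hull {prev_vtx n p k, vtx n p k} \<noteq> {}" by (simp add: affine_hull_eq_empty)
  next
    fix z assume z: "z \<in> affine hull {prev_vtx n p k, vtx n p k}"
    then obtain t where t: "z = prev_vtx n p k + t *\<^sub>R (vtx n p k - prev_vtx n p k)"
      unfolding affine_hull_2_alt by auto
    have zV: "z - vtx n p k = of_real ((t - 1) * (2 * r * sp)) * d"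
      unfolding t prev_vtx_eq scaleR_conv_of_real
      using prev_form2[of k] unfolding d_def[symmetric]
      by (simp add: algebra_simps)
    have re0: "Re ((z - vtx n p k) * cnj (\<i> * d)) = 0"
    proof -
      have "d * cnj d = 1" using dn complex_norm_square[of d] by simp
      then show ?thesis unfolding zV by (simp add: algebra_simps)
    qed
    have rexV: "Re ((x - vtx n p k) * cnj (\<i> * d)) = y * sp"
    proof -
      have cd: "cnj (\<i> * d) = - of_real \<sigma> * cis (\<beta> / 2 - \<phi> k)"
      proof -
        have "cnj (\<i> * d) = (\<i> * \<i>) * of_real \<sigma> * (cis (- \<phi> k) * cis \<beta> * cis (- (\<beta> / 2)))"
          unfolding d_def \<kappa>_def by (simp add: cis_cnj algebra_simps)
        also have "cis (- \<phi> k) * cis \<beta> * cis (- (\<beta> / 2)) = cis (\<beta> / 2 - \<phi> k)"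
          by (simp add: cis_mult)
        finally show ?thesis by simp
      qed
      have "(x - vtx n p k) * cnj (\<i> * d) = - \<i> * of_real (\<sigma> * y) * (cis (\<phi> k) * cis (\<beta> / 2 - \<phi> k))"
        unfolding xV cd by (simp add: algebra_simps)
      also have "cis (\<phi> k) * cis (\<beta> / 2 - \<phi> k) = cis (\<beta> / 2)" by (simp add: cis_mult)
      finally have E: "(x - vtx n p k) * cnj (\<i> * d) = - \<i> * of_real (\<sigma> * y) * cis (\<beta> / 2)" .
      have "Re (- \<i> * of_real (\<sigma> * y) * cis (\<beta> / 2)) = \<sigma> * y * sin (\<beta> / 2)" by simp
      then have "Re ((x - vtx n p k) * cnj (\<i> * d)) = \<sigma> * y * sin (\<beta> / 2)" unfolding E .
      also have "\<dots> = y * sp" unfolding sin_half_beta using s by auto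
      finally show ?thesis .
    qed
    have "\<bar>Re ((x - z) * cnj (\<i> * d))\<bar> \<le> cmod ((x - z) * cnj (\<i> * d))" by (rule abs_Re_le_cmod)
    also have "\<dots> = dist x z" using dn by (simp add: norm_mult dist_norm)
    finally have "\<bar>Re ((x - z) * cnj (\<i> * d))\<bar> \<le> dist x z" .
    moreover have "Re ((x - z) * cnj (\<i> * d)) = Re ((x - vtx n p k) * cnj (\<i> * d)) - Re ((z - vtx n p k) * cnj (\<i> * d))"
      by (simp add: algebra_simps)
    ultimately show "\<bar>y\<bar> * sp \<le> dist x z" using rexV re0 r sp_pos by (simp add: abs_mult)
  qed
  have "infdist x (affine hull {prev_vtx n p k, vtx n p k}) < w0 / 2"
    using x unfolding fold_segment_def by simp
  then have "\<bar>y\<bar> * sp < r * (sp * tan (pi / real n))" using lower unfolding w0_def by simp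
  then have "\<bar>y\<bar> * sp < (r * tan (pi / real n)) * sp" by (simp add: ac_simps)
  then have "\<bar>y\<bar> < r * tan (pi / real n)" using sp_pos mult_right_less_imp_less by fastforce
  then show ?thesis unfolding y_def .
qed

lemma fold_disjoint:
  assumes i: "i < n" and j: "j < n" and ne: "i \<noteq> j"
  shows "fold_segment n p w0 i \<inter> fold_segment n p w0 j = {}"
proof (rule ccontr)
  assume "fold_segment n p w0 i \<inter> fold_segment n p w0 j \<noteq> {}"
  then obtain x where xi: "x \<in> fold_segment n p w0 i" and xj: "x \<in> fold_segment n p w0 j" by blast
  define P where "P = (x - c) * cnj (cis (\<phi> i))"
  define y where "y = Im P"
  have reP: "Re P = r" using xi fold_line_reg unfolding fold_segment_def P_def by auto
  have yb: "\<bar>y\<bar> < r * tan (pi / real n)" using seg_y[OF xi] unfolding y_def P_def .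
  have P: "P = Complex r y" using reP by (simp add: y_def complex_eq_iff)
  have rj: "Re ((x - c) * cnj (cis (\<phi> j))) = r" using xj fold_line_reg unfolding fold_segment_def by auto
  define \<delta> where "\<delta> = \<phi> i - \<phi> j"
  have "(x - c) * cnj (cis (\<phi> j)) = P * cis \<delta>"
  proof -
    have "(x - c) * cnj (cis (\<phi> j)) = (x - c) * (cnj (cis (\<phi> i)) * cis (\<phi> i)) * cnj (cis (\<phi> j))"
      by (simp add: cnj_cis_cis)
    also have "\<dots> = P * (cis (\<phi> i) * cis (- \<phi> j))" unfolding P_def by (simp add: cis_cnj ac_simps)
    also have "cis (\<phi> i) * cis (- \<phi> j) = cis \<delta>" unfolding \<delta>_def by (simp add: cis_mult)
    finally show ?thesis .
  qed
  then have "Re (Complex r y * cis \<delta>) = r" using rj P by simp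
  then have eq1: "r * cos \<delta> - y * sin \<delta> = r" by simp
  define \<gamma> where "\<gamma> = \<delta> / 2"
  have cd: "cos \<delta> = 1 - 2 * (sin \<gamma> * sin \<gamma>)" unfolding \<gamma>_def using cos_double_sin[of "\<delta>/2"]
    by (simp add: power2_eq_square)
  have sd: "sin \<delta> = 2 * (sin \<gamma> * cos \<gamma>)" unfolding \<gamma>_def using sin_double[of "\<delta>/2"] by simp
  have eq2: "r * (sin \<gamma> * sin \<gamma>) = - (y * (sin \<gamma> * cos \<gamma>))"
    using eq1 unfolding cd sd by (simp add: algebra_simps)
  define e where "e = \<bar>real i - real j\<bar>"
  have e1: "1 \<le> e" "e \<le> real n - 1" using i j ne unfolding e_def by (auto simp: abs_if)
  have g: "\<gamma> = pi * e / real n \<or> \<gamma> = - (pi * e / real n)"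
    unfolding \<gamma>_def \<delta>_def \<phi>_def e_def using s np by (auto simp: abs_if field_simps)
  have sg: "\<bar>sin \<gamma>\<bar> = \<bar>sin (pi * e / real n)\<bar>" "\<bar>cos \<gamma>\<bar> = \<bar>cos (pi * e / real n)\<bar>"
    using g by auto
  have sb: "sp \<le> sin (pi * e / real n)" "\<bar>cos (pi * e / real n)\<bar> \<le> cos (pi / real n)"
    using sin_cos_bounds[OF _ e1] n unfolding sp_def by auto
  have sgp: "\<bar>sin \<gamma>\<bar> \<ge> sp" using sg sb sp_pos by auto
  then have sg0: "\<bar>sin \<gamma>\<bar> > 0" using sp_pos by simp
  have "r * \<bar>sin \<gamma>\<bar> * \<bar>sin \<gamma>\<bar> = \<bar>y\<bar> * \<bar>cos \<gamma>\<bar> * \<bar>sin \<gamma>\<bar>"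
  proof -
    have "\<bar>r * (sin \<gamma> * sin \<gamma>)\<bar> = \<bar>y * (sin \<gamma> * cos \<gamma>)\<bar>" using eq2 by simp
    then show ?thesis using r by (simp add: abs_mult algebra_simps)
  qed
  then have A: "r * \<bar>sin \<gamma>\<bar> = \<bar>y\<bar> * \<bar>cos \<gamma>\<bar>" using sg0 by simp
  have "\<bar>y\<bar> * \<bar>cos \<gamma>\<bar> \<le> \<bar>y\<bar> * cos (pi / real n)"
    using sg(2) sb(2) by (intro mult_left_mono) auto
  also have "\<dots> < r * tan (pi / real n) * cos (pi / real n)"
    using yb cos_pn_pos by (intro mult_strict_right_mono) auto
  also have "r * tan (pi / real n) * cos (pi / real n) = r * sp"
    using cos_pn_pos unfolding sp_def tan_def by simp
  also have "\<dots> \<le> r * \<bar>sin \<gamma>\<bar>" using sgp r by (intro mult_left_mono) auto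
  finally show False using A by simp
qed

lemma regular_good:
  "admissible n p \<and> folded_ribbon n p w0 \<and> ribbonlength n p w0 = real n * cot (pi / real n)"
proof (intro conjI)
  show "admissible n p" unfolding admissible_def
    using simple nondeg interior_bounds by auto
  show "folded_ribbon n p w0" unfolding folded_ribbon_def using w0_pos fold_disjoint by auto
  have "ribbonlength n p w0 = real n * (2 * r * sp) / (2 * r * sp * tan (pi / real n))"
    unfolding ribbonlength_def plen w0_def ..
  also have "\<dots> = real n / tan (pi / real n)" using r sp_pos by (simp add: field_simps)
  also have "\<dots> = real n * cot (pi / real n)"
    using cos_pn_pos sp_pos unfolding sp_def tan_def cot_def by (simp add: field_simps)
  finally show "ribbonlength n p w0 = real n * cot (pi / real n)" .
qed

end

lemma regular_attains:
  assumes n: "n \<ge> 4" and reg: "regular_polygon n p"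
  shows "\<exists>w. admissible n p \<and> folded_ribbon n p w \<and> ribbonlength n p w = real n * cot (pi / real n)"
proof -
  have n0: "n > 0" using n by simp
  obtain c r \<theta> \<sigma> where r: "r > 0" and s: "\<sigma> = 1 \<or> \<sigma> = -1"
    and V: "\<And>k. vtx n p k = c + of_real r * cis (\<theta> + \<sigma> * 2 * pi * real k / real n)"
    by (rule reg_rep[OF n0 reg], blast)
  interpret regpoly n p c r \<theta> \<sigma> using n r s V by unfold_locales auto
  show ?thesis using regular_good by blast
qed

theorem corollary6p6:
  fixes n :: nat
  assumes "n \<ge> 4"
  shows "Inf {ribbonlength n p w | p w. admissible n p \<and> folded_ribbon n p w}
           = real n * cot (pi / real n)
       \<and> (\<forall>p. regular_polygon n p \<longrightarrow>
            (\<exists>w. admissible n p \<and> folded_ribbon n p w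
                 \<and> ribbonlength n p w = real n * cot (pi / real n)))"
proof
  show part2: "\<forall>p. regular_polygon n p \<longrightarrow>
            (\<exists>w. admissible n p \<and> folded_ribbon n p w
                 \<and> ribbonlength n p w = real n * cot (pi / real n))"
    using regular_attains[OF assms] by blast
  define p0 where "p0 = (\<lambda>i::nat. 0 + complex_of_real 1 * cis (0 + 1 * 2 * pi * real i / real n))"
  have "regular_polygon n p0" unfolding regular_polygon_def p0_def
    by (rule exI[of _ 0], rule exI[of _ 1], rule exI[of _ 0], rule exI[of _ 1]) simp
  then obtain w where w: "admissible n p0" "folded_ribbon n p0 w"
      "ribbonlength n p0 w = real n * cot (pi / real n)"
    using part2 by blast
  show "Inf {ribbonlength n p w | p w. admissible n p \<and> folded_ribbon n p w} = real n * cot (pi / real n)"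
  proof (rule cInf_eq_minimum)
    show "real n * cot (pi / real n) \<in> {ribbonlength n p w | p w. admissible n p \<and> folded_ribbon n p w}"
    proof -
      have "\<exists>p w'. real n * cot (pi / real n) = ribbonlength n p w' \<and> admissible n p \<and> folded_ribbon n p w'"
        using w by (intro exI[of _ p0] exI[of _ w]) simp
      then show ?thesis by (simp only: mem_Collect_eq)
    qed
  next
    fix y assume "y \<in> {ribbonlength n p w | p w. admissible n p \<and> folded_ribbon n p w}"
    then obtain p w where yy: "y = ribbonlength n p w" and ad: "admissible n p" and fr: "folded_ribbon n p w"
      by blast
    show "real n * cot (pi / real n) \<le> y" unfolding yy by (rule lower_bound[OF assms ad fr])
  qed
qed

end
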